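(* Let $\mathsf F$ be a $\Gamma$-graded field, $\varepsilon\in\Gamma_{\mathsf F}$, and $\Phi=(\mathsf V,q,b)$ an $\varepsilon$-shifted quadratic space over $\mathsf F$ of type $T\in\{I,II,\tau\text{-}III\}$ ($\tau\in\mathsf F_\varepsilon\setminus\{0\}$). For $\Lambda\in\Gamma/\Gamma_{\mathsf F}$ let $\Phi_\Lambda=(\mathsf V_\Lambda,q|_{\mathsf V_\Lambda},b|_{\mathsf V_\Lambda})$, and for an orbit $P=\{\Lambda,\bar\Lambda\}$ of the involution $[\gamma]\mapsto[\bar\gamma]$ on $(\Gamma/\Gamma_{\mathsf F})\setminus(\frac12\Gamma_{\mathsf F}/\Gamma_{\mathsf F})$ let $\Phi_P$ be the restriction of $\Phi$ to $\mathsf V_\Lambda+\mathsf V_{\bar\Lambda}$. Then $$\Phi=\Big(\mathop{\perp}_{\Lambda\in\frac12\Gamma_{\mathsf F}/\Gamma_{\mathsf F}}\Phi_\Lambda\Big)\perp\Psi,\qquad\Psi=\mathop{\perp}_{P}\Phi_P,$$ where $\Psi$ and all $\Phi_\Lambda$ ($\Lambda\in\frac12\Gamma_{\mathsf F}/\Gamma_{\mathsf F}$) are $\varepsilon$-shifted spaces of type $T$, and $\Psi$ is metabolic.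
   Context: $\Gamma$ is a divisible torsion-free abelian group; $\mathsf F=\bigoplus\mathsf F_\gamma$ a $\Gamma$-graded field (graded commutative ring, nonzero homogeneous elements invertible), $\Gamma_{\mathsf F}=\{\gamma:\mathsf F_\gamma\ne0\}$, $\frac12\Gamma_{\mathsf F}=\{\gamma:2\gamma\in\Gamma_{\mathsf F}\}$. For $\gamma\in\Gamma$: $[\gamma]=\gamma+\Gamma_{\mathsf F}$, $\mathsf V_{[\gamma]}=\bigoplus_{\delta\in\Gamma_{\mathsf F}}\mathsf V_{\gamma+\delta}$, $\bar\gamma=-(\gamma+\varepsilon)$; since $\varepsilon\in\Gamma_{\mathsf F}$, $[\gamma]=[\bar\gamma]$ for $\gamma\in\frac12\Gamma_{\mathsf F}$ and the involution has no fixed points outside $\frac12\Gamma_{\mathsf F}/\Gamma_{\mathsf F}$. An $\varepsilon$-shifted quadratic space is $(\mathsf V,q,b)$ with $\mathsf V$ a finite-dimensional graded $\mathsf F$-vector space, $q$ a graded quadratic form ($q(\lambda x)=\lambda^2q(x)$, polar form $b_q$ $0$-shifted bilinear, $q(\mathsf V_\gamma)\subset\mathsf F_{2\gamma}$), $b$ a nondegenerate symmetric bilinear form with $b(\mathsf V_\gamma,\mathsf V_\delta)\subset\mathsf F_{\gamma+\delta+\varepsilon}$, and $b_q=\lambda b$ for some $\lambda\in\mathsf F$. Types: $I$: $\varepsilon=0$, $b=b_q$ (or $\mathsf V=0$); $II$: $q$ totally singular ($q(x+y)=q(x)+q(y)$) and $b$ alternating; $\tau$-$III$: $q(x)=\tau^{-1}b(x,x)$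 for all $x$. Metabolic: there is a graded subspace $\mathsf L$ with $\dim\mathsf L=\frac12\dim\mathsf V$ and $q(\mathsf L)=0=b(\mathsf L,\mathsf L)$. Orthogonal sums are with respect to $b$. *)

theory Defs
  imports Main
begin

definition natmult :: "nat \<Rightarrow> 'g::ab_group_add \<Rightarrow> 'g" where
  "natmult n \<gamma> = (\<Sum>_\<in>{..<n}. \<gamma>)"

definition divisible_torsion_free :: "'g::ab_group_add itself \<Rightarrow> bool" where
  "divisible_torsion_free _ \<longleftrightarrow>
     (\<forall>(\<gamma>::'g) n. n > 0 \<longrightarrow> (\<exists>\<delta>. natmult n \<delta> = \<gamma>)) \<and>
     (\<forall>(\<gamma>::'g) n. n > 0 \<longrightarrow> natmult n \<gamma> = 0 \<longrightarrow> \<gamma> = 0)"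

definition gdecomp :: "('g \<Rightarrow> 'a::comm_monoid_add set) \<Rightarrow> 'a \<Rightarrow> ('g \<Rightarrow> 'a) \<Rightarrow> bool" where
  "gdecomp A x c \<longleftrightarrow> finite {\<gamma>. c \<gamma> \<noteq> 0} \<and> (\<forall>\<gamma>. c \<gamma> \<in> A \<gamma>) \<and> x = (\<Sum>\<gamma>\<in>{\<gamma>. c \<gamma> \<noteq> 0}. c \<gamma>)"

definition is_graded :: "('g \<Rightarrow> 'a::ab_group_add set) \<Rightarrow> bool" where
  "is_graded A \<longleftrightarrow> (\<forall>\<gamma>. 0 \<in> A \<gamma> \<and> (\<forall>x\<in>A \<gamma>. \<forall>y\<in>A \<gamma>. x + y \<in> A \<gamma> \<and> - x \<in> A \<gamma>))
                 \<and> (\<forall>x. \<exists>!c. gdecomp A x c)"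

definition hcomp :: "('g \<Rightarrow> 'a::comm_monoid_add set) \<Rightarrow> 'g \<Rightarrow> 'a \<Rightarrow> 'a" where
  "hcomp A \<gamma> x = (THE c. gdecomp A x c) \<gamma>"

definition homogeneous :: "('g \<Rightarrow> 'a set) \<Rightarrow> 'a \<Rightarrow> bool" where
  "homogeneous A x \<longleftrightarrow> (\<exists>\<gamma>. x \<in> A \<gamma>)"

definition graded_field :: "('g::ab_group_add \<Rightarrow> 'f::comm_ring_1 set) \<Rightarrow> bool" where
  "graded_field Fg \<longleftrightarrow> is_graded Fg \<and> 1 \<in> Fg 0 \<and>
     (\<forall>\<gamma> \<delta>. \<forall>x\<in>Fg \<gamma>. \<forall>y\<in>Fg \<delta>. x * y \<in> Fg (\<gamma> + \<delta>)) \<and>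
     (\<forall>\<gamma>. \<forall>x\<in>Fg \<gamma>. x \<noteq> 0 \<longrightarrow> (\<exists>y. x * y = 1))"

definition GammaF :: "('g \<Rightarrow> 'f::zero set) \<Rightarrow> 'g set" where
  "GammaF Fg = {\<gamma>. \<exists>x\<in>Fg \<gamma>. x \<noteq> 0}"

definition halfGammaF :: "('g::ab_group_add \<Rightarrow> 'f::zero set) \<Rightarrow> 'g set" where
  "halfGammaF Fg = {\<gamma>. \<gamma> + \<gamma> \<in> GammaF Fg}"

definition ginv :: "'f::comm_ring_1 \<Rightarrow> 'f" where
  "ginv t = (THE y. t * y = 1)"

definition graded_vspace ::
  "('g::ab_group_add \<Rightarrow> 'f::comm_ring_1 set) \<Rightarrow> ('f \<Rightarrow> 'v::ab_group_add \<Rightarrow> 'v) \<Rightarrow> ('g \<Rightarrow> 'v set) \<Rightarrow> bool" where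
  "graded_vspace Fg sc Vg \<longleftrightarrow>
     (\<forall>a x y. sc a (x + y) = sc a x + sc a y) \<and>
     (\<forall>a c x. sc (a + c) x = sc a x + sc c x) \<and>
     (\<forall>a c x. sc (a * c) x = sc a (sc c x)) \<and>
     (\<forall>x. sc 1 x = x) \<and>
     is_graded Vg \<and>
     (\<forall>\<gamma> \<delta>. \<forall>a\<in>Fg \<gamma>. \<forall>x\<in>Vg \<delta>. sc a x \<in> Vg (\<gamma> + \<delta>))"

definition lin_indep :: "('f::comm_ring_1 \<Rightarrow> 'v::ab_group_add \<Rightarrow> 'v) \<Rightarrow> 'v set \<Rightarrow> bool" where
  "lin_indep sc B \<longleftrightarrow> (\<forall>S a. finite S \<and> S \<subseteq> B \<and> (\<Sum>v\<in>S. sc (a v) v) = 0 \<longrightarrow> (\<forall>v\<in>S. a v = 0))"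

definition lin_span :: "('f::comm_ring_1 \<Rightarrow> 'v::ab_group_add \<Rightarrow> 'v) \<Rightarrow> 'v set \<Rightarrow> 'v set" where
  "lin_span sc B = {(\<Sum>v\<in>S. sc (a v) v) | S a. finite S \<and> S \<subseteq> B}"

definition hbasis :: "('g \<Rightarrow> 'v set) \<Rightarrow> ('f::comm_ring_1 \<Rightarrow> 'v::ab_group_add \<Rightarrow> 'v) \<Rightarrow> 'v set \<Rightarrow> 'v set \<Rightarrow> bool" where
  "hbasis Vg sc W B \<longleftrightarrow> B \<subseteq> W \<and> (\<forall>x\<in>B. homogeneous Vg x) \<and> lin_indep sc B \<and> lin_span sc B = W"

definition graded_subspace :: "('g \<Rightarrow> 'v set) \<Rightarrow> ('f::comm_ring_1 \<Rightarrow> 'v::ab_group_add \<Rightarrow> 'v) \<Rightarrow> 'v set \<Rightarrow> bool" where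
  "graded_subspace Vg sc W \<longleftrightarrow> 0 \<in> W \<and> (\<forall>x\<in>W. \<forall>y\<in>W. x + y \<in> W) \<and> (\<forall>a. \<forall>x\<in>W. sc a x \<in> W)
     \<and> (\<forall>x\<in>W. \<forall>\<gamma>. hcomp Vg \<gamma> x \<in> W)"

definition fin_dim :: "('g \<Rightarrow> 'v set) \<Rightarrow> ('f::comm_ring_1 \<Rightarrow> 'v::ab_group_add \<Rightarrow> 'v) \<Rightarrow> 'v set \<Rightarrow> bool" where
  "fin_dim Vg sc W \<longleftrightarrow> (\<exists>B. finite B \<and> hbasis Vg sc W B)"

definition gdim :: "('g \<Rightarrow> 'v set) \<Rightarrow> ('f::comm_ring_1 \<Rightarrow> 'v::ab_group_add \<Rightarrow> 'v) \<Rightarrow> 'v set \<Rightarrow> nat" where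
  "gdim Vg sc W = card (SOME B. finite B \<and> hbasis Vg sc W B)"

definition polar :: "('v::ab_group_add \<Rightarrow> 'f::comm_ring_1) \<Rightarrow> 'v \<Rightarrow> 'v \<Rightarrow> 'f" where
  "polar q x y = q (x + y) - q x - q y"

definition bilin_on :: "('f::comm_ring_1 \<Rightarrow> 'v::ab_group_add \<Rightarrow> 'v) \<Rightarrow> 'v set \<Rightarrow> ('v \<Rightarrow> 'v \<Rightarrow> 'f) \<Rightarrow> bool" where
  "bilin_on sc W f \<longleftrightarrow> (\<forall>x\<in>W. \<forall>y\<in>W. \<forall>z\<in>W. \<forall>a.
      f (x + y) z = f x z + f y z \<and> f x (y + z) = f x y + f x z \<and>
      f (sc a x) z = a * f x z \<and> f x (sc a z) = a * f x z)"

definition shifted_on :: "('g::ab_group_add \<Rightarrow> 'f set) \<Rightarrow> ('g \<Rightarrow> 'v set) \<Rightarrow> 'g \<Rightarrow> 'v set \<Rightarrow> ('v \<Rightarrow> 'v \<Rightarrow> 'f) \<Rightarrow> bool" where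
  "shifted_on Fg Vg \<epsilon> W f \<longleftrightarrow> (\<forall>\<gamma> \<delta>. \<forall>x\<in>W \<inter> Vg \<gamma>. \<forall>y\<in>W \<inter> Vg \<delta>. f x y \<in> Fg (\<gamma> + \<delta> + \<epsilon>))"

definition eps_qspace ::
  "('g::ab_group_add \<Rightarrow> 'f::comm_ring_1 set) \<Rightarrow> ('f \<Rightarrow> 'v::ab_group_add \<Rightarrow> 'v) \<Rightarrow> ('g \<Rightarrow> 'v set) \<Rightarrow> 'g
    \<Rightarrow> 'v set \<Rightarrow> ('v \<Rightarrow> 'f) \<Rightarrow> ('v \<Rightarrow> 'v \<Rightarrow> 'f) \<Rightarrow> bool" where
  "eps_qspace Fg sc Vg \<epsilon> W q b \<longleftrightarrow>
     graded_subspace Vg sc W \<and> fin_dim Vg sc W \<and>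
     \<comment> \<open>graded quadratic form\<close>
     (\<forall>a. \<forall>x\<in>W. q (sc a x) = a * a * q x) \<and>
     bilin_on sc W (polar q) \<and> shifted_on Fg Vg 0 W (polar q) \<and>
     (\<forall>\<gamma>. \<forall>x\<in>W \<inter> Vg \<gamma>. q x \<in> Fg (\<gamma> + \<gamma>)) \<and>
     \<comment> \<open>nondegenerate symmetric epsilon-shifted bilinear form\<close>
     bilin_on sc W b \<and> (\<forall>x\<in>W. \<forall>y\<in>W. b x y = b y x) \<and>
     (\<forall>x\<in>W. (\<forall>y\<in>W. b x y = 0) \<longrightarrow> x = 0) \<and>
     shifted_on Fg Vg \<epsilon> W b \<and>
     (\<exists>c. \<forall>x\<in>W. \<forall>y\<in>W. polar q x y = c * b x y)"

datatype 'f qtype = TyI | TyII | TyIII 'f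

definition qtype_ok :: "('g \<Rightarrow> 'f::zero set) \<Rightarrow> 'g \<Rightarrow> 'f qtype \<Rightarrow> bool" where
  "qtype_ok Fg \<epsilon> T \<longleftrightarrow> (case T of TyIII \<tau> \<Rightarrow> \<tau> \<in> Fg \<epsilon> \<and> \<tau> \<noteq> 0 | _ \<Rightarrow> True)"

definition has_type :: "'f::comm_ring_1 qtype \<Rightarrow> 'g::zero \<Rightarrow> 'v::ab_group_add set \<Rightarrow> ('v \<Rightarrow> 'f) \<Rightarrow> ('v \<Rightarrow> 'v \<Rightarrow> 'f) \<Rightarrow> bool" where
  "has_type T \<epsilon> W q b \<longleftrightarrow> (case T of
      TyI \<Rightarrow> (\<epsilon> = 0 \<and> (\<forall>x\<in>W. \<forall>y\<in>W. b x y = polar q x y)) \<or> W = {0}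
    | TyII \<Rightarrow> (\<forall>x\<in>W. \<forall>y\<in>W. q (x + y) = q x + q y) \<and> (\<forall>x\<in>W. b x x = 0)
    | TyIII \<tau> \<Rightarrow> (\<forall>x\<in>W. q x = ginv \<tau> * b x x))"

definition metabolic ::
  "('f::comm_ring_1 \<Rightarrow> 'v::ab_group_add \<Rightarrow> 'v) \<Rightarrow> ('g \<Rightarrow> 'v set) \<Rightarrow> 'v set \<Rightarrow> ('v \<Rightarrow> 'f) \<Rightarrow> ('v \<Rightarrow> 'v \<Rightarrow> 'f) \<Rightarrow> bool" where
  "metabolic sc Vg W q b \<longleftrightarrow> (\<exists>L. graded_subspace Vg sc L \<and> L \<subseteq> W \<and> 2 * gdim Vg sc L = gdim Vg sc W \<and>
      (\<forall>x\<in>L. q x = 0) \<and> (\<forall>x\<in>L. \<forall>y\<in>L. b x y = 0))"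

definition coset :: "('g::ab_group_add \<Rightarrow> 'f::zero set) \<Rightarrow> 'g \<Rightarrow> 'g set" where
  "coset Fg \<gamma> = {\<gamma> + \<delta> | \<delta>. \<delta> \<in> GammaF Fg}"

definition cosets :: "('g::ab_group_add \<Rightarrow> 'f::zero set) \<Rightarrow> 'g set set" where
  "cosets Fg = range (coset Fg)"

definition half_cosets :: "('g::ab_group_add \<Rightarrow> 'f::zero set) \<Rightarrow> 'g set set" where
  "half_cosets Fg = coset Fg ` halfGammaF Fg"

definition cbar :: "'g::ab_group_add \<Rightarrow> 'g set \<Rightarrow> 'g set" where
  "cbar \<epsilon> \<Lambda> = (\<lambda>\<gamma>. - (\<gamma> + \<epsilon>)) ` \<Lambda>"

definition orbits :: "('g::ab_group_add \<Rightarrow> 'f::zero set) \<Rightarrow> 'g \<Rightarrow> 'g set set set" where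
  "orbits Fg \<epsilon> = {{\<Lambda>, cbar \<epsilon> \<Lambda>} | \<Lambda>. \<Lambda> \<in> cosets Fg - half_cosets Fg}"

text \<open>V_Lambda = direct sum of the V_gamma, gamma in Lambda.\<close>
definition Vcos :: "('g \<Rightarrow> 'v::ab_group_add set) \<Rightarrow> 'g set \<Rightarrow> 'v set" where
  "Vcos Vg \<Lambda> = {x. \<forall>\<gamma>. \<gamma> \<notin> \<Lambda> \<longrightarrow> hcomp Vg \<gamma> x = 0}"

definition subsum :: "'i set \<Rightarrow> ('i \<Rightarrow> 'v::comm_monoid_add set) \<Rightarrow> 'v set" where
  "subsum I S = {(\<Sum>i\<in>J. f i) | J f. finite J \<and> J \<subseteq> I \<and> (\<forall>i\<in>J. f i \<in> S i)}"

definition Vorb :: "('g \<Rightarrow> 'v::ab_group_add set) \<Rightarrow> 'g set set \<Rightarrow> 'v set" where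
  "Vorb Vg P = subsum P (Vcos Vg)"

definition orth_decomp :: "('v::ab_group_add \<Rightarrow> 'v \<Rightarrow> 'f::zero) \<Rightarrow> 'v set \<Rightarrow> 'i set \<Rightarrow> ('i \<Rightarrow> 'v set) \<Rightarrow> bool" where
  "orth_decomp b W I S \<longleftrightarrow> (\<forall>i\<in>I. S i \<subseteq> W) \<and>
     (\<forall>w\<in>W. \<exists>!f. (\<forall>i. i \<notin> I \<longrightarrow> f i = 0) \<and> finite {i. f i \<noteq> 0} \<and> (\<forall>i\<in>I. f i \<in> S i) \<and>
                  w = (\<Sum>i\<in>{i. f i \<noteq> 0}. f i)) \<and>
     (\<forall>i\<in>I. \<forall>j\<in>I. i \<noteq> j \<longrightarrow> (\<forall>x\<in>S i. \<forall>y\<in>S j. b x y = 0))"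

end

theory Submission
  imports Defs
begin

lemma gdecomp_intro:
  assumes "finite S" "\<forall>\<gamma>. \<gamma> \<notin> S \<longrightarrow> c \<gamma> = 0" "\<forall>\<gamma>. c \<gamma> \<in> A \<gamma>" "x = (\<Sum>\<gamma>\<in>S. c \<gamma>)"
  shows "gdecomp A x c"
proof -
  have sub: "{\<gamma>. c \<gamma> \<noteq> 0} \<subseteq> S" using assms(2) by auto
  have "(\<Sum>\<gamma>\<in>S. c \<gamma>) = (\<Sum>\<gamma>\<in>{\<gamma>. c \<gamma> \<noteq> 0}. c \<gamma>)"
    by (rule sum.mono_neutral_right[OF assms(1) sub]) auto
  then show ?thesis using assms finite_subset[OF sub] unfolding gdecomp_def by auto
qed

lemma gdecomp_sumS:
  assumes "gdecomp A x c" "finite S" "{\<gamma>. c \<gamma> \<noteq> 0} \<subseteq> S"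
  shows "x = (\<Sum>\<gamma>\<in>S. c \<gamma>)"
proof -
  have "(\<Sum>\<gamma>\<in>S. c \<gamma>) = (\<Sum>\<gamma>\<in>{\<gamma>. c \<gamma> \<noteq> 0}. c \<gamma>)"
    by (rule sum.mono_neutral_right[OF assms(2,3)]) auto
  then show ?thesis using assms(1) unfolding gdecomp_def by auto
qed

context
  fixes A :: "'g \<Rightarrow> 'a::ab_group_add set"
  assumes gr: "is_graded A"
begin

lemma gr_zero: "0 \<in> A \<gamma>" using gr unfolding is_graded_def by auto
lemma gr_add: "x \<in> A \<gamma> \<Longrightarrow> y \<in> A \<gamma> \<Longrightarrow> x + y \<in> A \<gamma>" using gr unfolding is_graded_def by auto
lemma gr_uminus: "x \<in> A \<gamma> \<Longrightarrow> - x \<in> A \<gamma>" using gr unfolding is_graded_def by auto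
lemma gr_diff: "x \<in> A \<gamma> \<Longrightarrow> y \<in> A \<gamma> \<Longrightarrow> x - y \<in> A \<gamma>"
  using gr_add[of x \<gamma> "-y"] gr_uminus[of y] by simp

lemma hc_decomp: "gdecomp A x (\<lambda>\<gamma>. hcomp A \<gamma> x)"
proof -
  have "\<exists>!c. gdecomp A x c" using gr unfolding is_graded_def by auto
  then have "gdecomp A x (THE c. gdecomp A x c)" by (rule theI')
  then show ?thesis unfolding hcomp_def by simp
qed

lemma hc_unique: "gdecomp A x c \<Longrightarrow> hcomp A \<gamma> x = c \<gamma>"
proof -
  assume a: "gdecomp A x c"
  have "\<exists>!c. gdecomp A x c" using gr unfolding is_graded_def by auto
  then have "(THE c. gdecomp A x c) = c" using a the1_equality by metis
  then show ?thesis unfolding hcomp_def by simp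
qed

lemma hc_mem: "hcomp A \<gamma> x \<in> A \<gamma>"
  using hc_decomp[of x] unfolding gdecomp_def by auto

lemma hc_finite: "finite {\<gamma>. hcomp A \<gamma> x \<noteq> 0}"
  using hc_decomp[of x] unfolding gdecomp_def by auto

lemma hc_sumS: "finite S \<Longrightarrow> {\<gamma>. hcomp A \<gamma> x \<noteq> 0} \<subseteq> S \<Longrightarrow> x = (\<Sum>\<gamma>\<in>S. hcomp A \<gamma> x)"
  using gdecomp_sumS[OF hc_decomp[of x]] by auto

lemma hc_sum0: "x = (\<Sum>\<gamma>\<in>{\<gamma>. hcomp A \<gamma> x \<noteq> 0}. hcomp A \<gamma> x)"
  using hc_sumS[OF hc_finite] by auto

lemma hc_add: "hcomp A \<gamma> (x + y) = hcomp A \<gamma> x + hcomp A \<gamma> y"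
proof -
  let ?S = "{\<gamma>. hcomp A \<gamma> x \<noteq> 0} \<union> {\<gamma>. hcomp A \<gamma> y \<noteq> 0}"
  have f: "finite ?S" using hc_finite by auto
  have "gdecomp A (x + y) (\<lambda>\<gamma>. hcomp A \<gamma> x + hcomp A \<gamma> y)"
  proof (rule gdecomp_intro[OF f])
    show "x + y = (\<Sum>\<gamma>\<in>?S. hcomp A \<gamma> x + hcomp A \<gamma> y)"
      using hc_sumS[OF f, of x] hc_sumS[OF f, of y] by (simp add: sum.distrib)
  qed (auto intro: gr_add hc_mem)
  then show ?thesis by (rule hc_unique)
qed

lemma hc_zero: "hcomp A \<gamma> 0 = 0"
  using hc_add[of \<gamma> 0 0] by simp

lemma hc_uminus: "hcomp A \<gamma> (- x) = - hcomp A \<gamma> x"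
  using hc_add[of \<gamma> x "-x"] hc_zero by (simp add: eq_neg_iff_add_eq_0 add.commute)

lemma hc_diff: "hcomp A \<gamma> (x - y) = hcomp A \<gamma> x - hcomp A \<gamma> y"
  using hc_add[of \<gamma> x "-y"] hc_uminus by simp

lemma hc_sum: "hcomp A \<gamma> (\<Sum>i\<in>I. f i) = (\<Sum>i\<in>I. hcomp A \<gamma> (f i))"
  by (induction I rule: infinite_finite_induct) (auto simp: hc_zero hc_add)

lemma hc_hom: "x \<in> A \<delta> \<Longrightarrow> hcomp A \<gamma> x = (if \<gamma> = \<delta> then x else 0)"
proof -
  assume x: "x \<in> A \<delta>"
  have "gdecomp A x (\<lambda>\<gamma>. if \<gamma> = \<delta> then x else 0)"
    by (rule gdecomp_intro[of "{\<delta>}"]) (auto simp: x gr_zero)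
  then show ?thesis by (rule hc_unique)
qed

lemma hc_ext: "(\<And>\<gamma>. hcomp A \<gamma> x = hcomp A \<gamma> y) \<Longrightarrow> x = y"
  using hc_sum0[of x] hc_sum0[of y] by simp

lemma hc_ext0: "(\<And>\<gamma>. hcomp A \<gamma> x = 0) \<Longrightarrow> x = 0"
  using hc_ext[of x 0] hc_zero by auto

end

lemma additive_zero:
  fixes \<phi> :: "'a::monoid_add \<Rightarrow> 'b::ab_group_add"
  assumes "\<And>x y. \<phi> (x + y) = \<phi> x + \<phi> y" shows "\<phi> 0 = 0"
proof -
  have "\<phi> 0 = \<phi> 0 + \<phi> 0" using assms[of 0 0] by simp
  then show ?thesis by simp
qed

lemma additive_sum:
  fixes \<phi> :: "'a::comm_monoid_add \<Rightarrow> 'b::ab_group_add"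
  assumes "\<And>x y. \<phi> (x + y) = \<phi> x + \<phi> y" shows "\<phi> (\<Sum>i\<in>I. f i) = (\<Sum>i\<in>I. \<phi> (f i))"
  by (induction I rule: infinite_finite_induct) (auto simp: assms additive_zero[OF assms])

lemma hc_lin:
  fixes A :: "'g::ab_group_add \<Rightarrow> 'a::ab_group_add set" and C :: "'g \<Rightarrow> 'c::ab_group_add set"
  assumes gA: "is_graded A" and gC: "is_graded C"
    and add: "\<And>x y. \<phi> (x + y) = \<phi> x + \<phi> y"
    and hom: "\<And>\<alpha> u. u \<in> A \<alpha> \<Longrightarrow> \<phi> u \<in> C (\<alpha> + \<delta>)"
  shows "hcomp C \<gamma> (\<phi> u) = \<phi> (hcomp A (\<gamma> - \<delta>) u)"
proof -
  let ?S = "{\<alpha>. hcomp A \<alpha> u \<noteq> 0}"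
  have f: "finite ?S" using hc_finite[OF gA] by auto
  have "\<phi> u = (\<Sum>\<alpha>\<in>?S. \<phi> (hcomp A \<alpha> u))"
    using additive_sum[of \<phi>, OF add] hc_sum0[OF gA, of u] by metis
  then have "hcomp C \<gamma> (\<phi> u) = (\<Sum>\<alpha>\<in>?S. hcomp C \<gamma> (\<phi> (hcomp A \<alpha> u)))"
    using hc_sum[OF gC] by metis
  also have "\<dots> = (\<Sum>\<alpha>\<in>?S. if \<alpha> = \<gamma> - \<delta> then \<phi> (hcomp A \<alpha> u) else 0)"
  proof (rule sum.cong[OF refl])
    fix \<alpha> assume "\<alpha> \<in> ?S"
    have "\<phi> (hcomp A \<alpha> u) \<in> C (\<alpha> + \<delta>)" by (rule hom[OF hc_mem[OF gA]])
    then show "hcomp C \<gamma> (\<phi> (hcomp A \<alpha> u)) = (if \<alpha> = \<gamma> - \<delta> then \<phi> (hcomp A \<alpha> u) else 0)"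
      by (auto simp: hc_hom[OF gC] algebra_simps)
  qed
  also have "\<dots> = \<phi> (hcomp A (\<gamma> - \<delta>) u)"
    using f additive_zero[of \<phi>, OF add] by (auto simp: sum.delta)
  finally show ?thesis .
qed



locale GS =
  fixes Fg :: "'g::ab_group_add \<Rightarrow> 'f::comm_ring_1 set"
    and sc :: "'f \<Rightarrow> 'v::ab_group_add \<Rightarrow> 'v"
    and Vg :: "'g \<Rightarrow> 'v set"
  assumes gf: "graded_field Fg" and gv: "graded_vspace Fg sc Vg"
begin

lemma grF: "is_graded Fg" using gf unfolding graded_field_def by auto
lemma grV: "is_graded Vg" using gv unfolding graded_vspace_def by auto
lemma oneF: "1 \<in> Fg 0" using gf unfolding graded_field_def by auto
lemma mulF: "x \<in> Fg \<alpha> \<Longrightarrow> y \<in> Fg \<beta> \<Longrightarrow> x * y \<in> Fg (\<alpha> + \<beta>)"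
  using gf unfolding graded_field_def by auto
lemma sc_addr: "sc a (x + y) = sc a x + sc a y" using gv unfolding graded_vspace_def by auto
lemma sc_addl: "sc (a + c) x = sc a x + sc c x" using gv unfolding graded_vspace_def by auto
lemma sc_mult: "sc (a * c) x = sc a (sc c x)" using gv unfolding graded_vspace_def by auto
lemma sc_one: "sc 1 x = x" using gv unfolding graded_vspace_def by auto
lemma sc_hom: "a \<in> Fg \<alpha> \<Longrightarrow> x \<in> Vg \<beta> \<Longrightarrow> sc a x \<in> Vg (\<alpha> + \<beta>)"
  using gv unfolding graded_vspace_def by auto

lemma sc_zerol: "sc 0 x = 0" using additive_zero[of "\<lambda>a. sc a x"] sc_addl by auto
lemma sc_zeror: "sc a 0 = 0" using additive_zero[of "sc a"] sc_addr by auto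
lemma sc_negl: "sc (- a) x = - sc a x"
  using sc_addl[of a "-a" x] sc_zerol by (simp add: eq_neg_iff_add_eq_0 add.commute)
lemma sc_negr: "sc a (- x) = - sc a x"
  using sc_addr[of a x "-x"] sc_zeror by (simp add: eq_neg_iff_add_eq_0 add.commute)
lemma sc_diffr: "sc a (x - y) = sc a x - sc a y"
  using sc_addr[of a x "-y"] sc_negr by simp
lemma sc_diffl: "sc (a - c) x = sc a x - sc c x"
  using sc_addl[of a "-c" x] sc_negl by simp
lemma sc_sumr: "sc a (\<Sum>i\<in>I. f i) = (\<Sum>i\<in>I. sc a (f i))"
  using additive_sum[of "sc a"] sc_addr by auto
lemma sc_suml: "sc (\<Sum>i\<in>I. f i) x = (\<Sum>i\<in>I. sc (f i) x)"
  using additive_sum[of "\<lambda>a. sc a x"] sc_addl by auto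

lemma zero_ne_one_F: "(0::'f) \<noteq> 1" by simp

lemma F_out: "\<gamma> \<notin> GammaF Fg \<Longrightarrow> x \<in> Fg \<gamma> \<Longrightarrow> x = 0"
  unfolding GammaF_def by auto

lemma hcF_out: "\<gamma> \<notin> GammaF Fg \<Longrightarrow> hcomp Fg \<gamma> a = 0"
  using F_out hc_mem[OF grF] by blast

lemma hc_sc: "x \<in> Vg \<delta> \<Longrightarrow> hcomp Vg \<gamma> (sc a x) = sc (hcomp Fg (\<gamma> - \<delta>) a) x"
  by (rule hc_lin[OF grF grV, of "\<lambda>a. sc a x"]) (auto simp: sc_addl sc_hom)

lemma hc_mul: "x \<in> Fg \<delta> \<Longrightarrow> hcomp Fg \<gamma> (x * y) = x * hcomp Fg (\<gamma> - \<delta>) y"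
  by (rule hc_lin[OF grF grF, of "\<lambda>y. x * y"]) (auto simp: distrib_left, metis add.commute mulF)

lemma inv_hom: assumes "x \<in> Fg \<gamma>" "x \<noteq> 0" shows "\<exists>y\<in>Fg (- \<gamma>). x * y = 1"
proof -
  obtain y where y: "x * y = 1" using gf assms unfolding graded_field_def by blast
  have "hcomp Fg 0 (x * y) = 1" using y hc_hom[OF grF oneF] by simp
  then have "x * hcomp Fg (- \<gamma>) y = 1" using hc_mul[OF assms(1)] by simp
  then show ?thesis using hc_mem[OF grF] by blast
qed

lemma Gamma0: "0 \<in> GammaF Fg" using oneF unfolding GammaF_def by force

lemma Gamma_add: "\<alpha> \<in> GammaF Fg \<Longrightarrow> \<beta> \<in> GammaF Fg \<Longrightarrow> \<alpha> + \<beta> \<in> GammaF Fg"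
proof -
  assume "\<alpha> \<in> GammaF Fg" "\<beta> \<in> GammaF Fg"
  then obtain x y where x: "x \<in> Fg \<alpha>" "x \<noteq> 0" and y: "y \<in> Fg \<beta>" "y \<noteq> 0"
    unfolding GammaF_def by auto
  obtain x' where x': "x * x' = 1" using inv_hom[OF x] by auto
  have "x * y \<noteq> 0"
  proof
    assume "x * y = 0"
    then have "x' * (x * y) = 0" by simp
    moreover have "x' * (x * y) = (x * x') * y" by (simp only: ac_simps)
    ultimately show False using x' y(2) by simp
  qed
  then show ?thesis using mulF[OF x(1) y(1)] unfolding GammaF_def by auto
qed

lemma Gamma_uminus: "\<alpha> \<in> GammaF Fg \<Longrightarrow> - \<alpha> \<in> GammaF Fg"
proof -
  assume "\<alpha> \<in> GammaF Fg"
  then obtain x where x: "x \<in> Fg \<alpha>" "x \<noteq> 0" unfolding GammaF_def by auto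
  obtain y where y: "y \<in> Fg (- \<alpha>)" "x * y = 1" using inv_hom[OF x] by auto
  then have "y \<noteq> 0" by auto
  then show ?thesis using y unfolding GammaF_def by auto
qed

lemma Gamma_diff: "\<alpha> \<in> GammaF Fg \<Longrightarrow> \<beta> \<in> GammaF Fg \<Longrightarrow> \<alpha> - \<beta> \<in> GammaF Fg"
  using Gamma_add[of \<alpha> "-\<beta>"] Gamma_uminus by simp

lemma Gamma_diff_iff: "\<beta> \<in> GammaF Fg \<Longrightarrow> (\<alpha> - \<beta> \<in> GammaF Fg) = (\<alpha> \<in> GammaF Fg)"
  using Gamma_diff Gamma_add by fastforce

lemma Gamma_add_iff: "\<beta> \<in> GammaF Fg \<Longrightarrow> (\<alpha> + \<beta> \<in> GammaF Fg) = (\<alpha> \<in> GammaF Fg)"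
  using Gamma_diff_iff[of "-\<beta>" \<alpha>] Gamma_uminus by fastforce

lemma Vcos_zero: "0 \<in> Vcos Vg G" unfolding Vcos_def by (simp add: hc_zero[OF grV])
lemma Vcos_add: "x \<in> Vcos Vg G \<Longrightarrow> y \<in> Vcos Vg G \<Longrightarrow> x + y \<in> Vcos Vg G"
  unfolding Vcos_def by (simp add: hc_add[OF grV])
lemma Vcos_uminus: "x \<in> Vcos Vg G \<Longrightarrow> - x \<in> Vcos Vg G"
  unfolding Vcos_def by (simp add: hc_uminus[OF grV])
lemma Vcos_diff: "x \<in> Vcos Vg G \<Longrightarrow> y \<in> Vcos Vg G \<Longrightarrow> x - y \<in> Vcos Vg G"
  unfolding Vcos_def by (simp add: hc_diff[OF grV])
lemma Vcos_sum: "(\<And>i. i \<in> I \<Longrightarrow> f i \<in> Vcos Vg G) \<Longrightarrow> (\<Sum>i\<in>I. f i) \<in> Vcos Vg G"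
  by (induction I rule: infinite_finite_induct) (auto intro: Vcos_zero Vcos_add)
lemma Vcos_hom: "\<gamma> \<in> G \<Longrightarrow> x \<in> Vg \<gamma> \<Longrightarrow> x \<in> Vcos Vg G"
  unfolding Vcos_def by (auto simp: hc_hom[OF grV])
lemma Vcos_hc: "x \<in> Vcos Vg G \<Longrightarrow> hcomp Vg \<gamma> x \<in> Vcos Vg G"
proof (cases "\<gamma> \<in> G")
  case True then show ?thesis using Vcos_hom[OF _ hc_mem[OF grV]] by blast
next
  case False
  assume "x \<in> Vcos Vg G"
  then have "hcomp Vg \<gamma> x = 0" using False unfolding Vcos_def by auto
  then show ?thesis using Vcos_zero by simp
qed
lemma Vcos_disj: "G \<inter> H = {} \<Longrightarrow> x \<in> Vcos Vg G \<Longrightarrow> x \<in> Vcos Vg H \<Longrightarrow> x = 0"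
  unfolding Vcos_def by (rule hc_ext0[OF grV]) auto
lemma Vcos_mono: "G \<subseteq> H \<Longrightarrow> Vcos Vg G \<subseteq> Vcos Vg H"
  unfolding Vcos_def by auto
lemma Vcos_UNIV: "Vcos Vg UNIV = UNIV" unfolding Vcos_def by auto
lemma Vcos_supp: "x \<in> Vcos Vg G \<Longrightarrow> hcomp Vg \<gamma> x \<noteq> 0 \<Longrightarrow> \<gamma> \<in> G"
  unfolding Vcos_def by auto

definition stable :: "'g set \<Rightarrow> bool" where
  "stable G \<longleftrightarrow> (\<forall>\<gamma>\<in>G. \<forall>\<delta>\<in>GammaF Fg. \<gamma> + \<delta> \<in> G)"

lemma Vcos_sc_hom:
  assumes st: "stable G" and x: "x \<in> Vg \<gamma>" "\<gamma> \<in> G"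
  shows "sc a x \<in> Vcos Vg G"
  unfolding Vcos_def
proof (intro CollectI allI impI)
  fix \<gamma>' assume "\<gamma>' \<notin> G"
  then have "\<gamma>' - \<gamma> \<notin> GammaF Fg" using st x(2) unfolding stable_def
    by (metis add.commute diff_add_cancel)
  then show "hcomp Vg \<gamma>' (sc a x) = 0" by (simp add: hc_sc[OF x(1)] hcF_out sc_zerol)
qed

lemma Vcos_sc:
  assumes st: "stable G" and x: "x \<in> Vcos Vg G"
  shows "sc a x \<in> Vcos Vg G"
proof -
  let ?S = "{\<gamma>. hcomp Vg \<gamma> x \<noteq> 0}"
  have "sc a x = (\<Sum>\<gamma>\<in>?S. sc a (hcomp Vg \<gamma> x))"
    using hc_sum0[OF grV, of x] sc_sumr by metis
  also have "\<dots> \<in> Vcos Vg G"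
  proof (rule Vcos_sum)
    fix \<gamma> assume "\<gamma> \<in> ?S"
    then have "\<gamma> \<in> G" using x unfolding Vcos_def by auto
    then show "sc a (hcomp Vg \<gamma> x) \<in> Vcos Vg G" by (rule Vcos_sc_hom[OF st hc_mem[OF grV]])
  qed
  finally show ?thesis .
qed

definition proj :: "'g set \<Rightarrow> 'v \<Rightarrow> 'v" where
  "proj G x = (\<Sum>\<gamma>\<in>{\<gamma>. hcomp Vg \<gamma> x \<noteq> 0} \<inter> G. hcomp Vg \<gamma> x)"

lemma hc_proj: "hcomp Vg \<delta> (proj G x) = (if \<delta> \<in> G then hcomp Vg \<delta> x else 0)"
proof -
  let ?S = "{\<gamma>. hcomp Vg \<gamma> x \<noteq> 0} \<inter> G"
  have f: "finite ?S" using hc_finite[OF grV] by auto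
  have "hcomp Vg \<delta> (proj G x) = (\<Sum>\<gamma>\<in>?S. hcomp Vg \<delta> (hcomp Vg \<gamma> x))"
    unfolding proj_def by (rule hc_sum[OF grV])
  also have "\<dots> = (\<Sum>\<gamma>\<in>?S. if \<delta> = \<gamma> then hcomp Vg \<gamma> x else 0)"
    by (rule sum.cong) (auto simp: hc_hom[OF grV hc_mem[OF grV]])
  also have "\<dots> = (if \<delta> \<in> G then hcomp Vg \<delta> x else 0)"
    using f by (auto simp: sum.delta)
  finally show ?thesis .
qed

lemma proj_mem: "proj G x \<in> Vcos Vg G" unfolding Vcos_def by (auto simp: hc_proj)
lemma proj_rest: "x - proj G x \<in> Vcos Vg (- G)"
  unfolding Vcos_def by (auto simp: hc_proj hc_diff[OF grV])

lemma span_fin: assumes "finite B"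
  shows "x \<in> lin_span sc B \<longleftrightarrow> (\<exists>a. x = (\<Sum>v\<in>B. sc (a v) v))"
proof
  assume "x \<in> lin_span sc B"
  then obtain S a where S: "finite S" "S \<subseteq> B" "x = (\<Sum>v\<in>S. sc (a v) v)"
    unfolding lin_span_def by auto
  have "(\<Sum>v\<in>B. sc (if v \<in> S then a v else 0) v) = (\<Sum>v\<in>S. sc (if v \<in> S then a v else 0) v)"
    by (rule sum.mono_neutral_right[OF assms S(2)]) (auto simp: sc_zerol)
  then show "\<exists>a. x = (\<Sum>v\<in>B. sc (a v) v)" using S(3) by (intro exI[of _ "\<lambda>v. if v \<in> S then a v else 0"]) simp
next
  assume "\<exists>a. x = (\<Sum>v\<in>B. sc (a v) v)"
  then show "x \<in> lin_span sc B" using assms unfolding lin_span_def by blast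
qed

lemma indep_fin: assumes "finite B"
  shows "lin_indep sc B \<longleftrightarrow> (\<forall>a. (\<Sum>v\<in>B. sc (a v) v) = 0 \<longrightarrow> (\<forall>v\<in>B. a v = 0))"
proof
  assume "lin_indep sc B" then show "\<forall>a. (\<Sum>v\<in>B. sc (a v) v) = 0 \<longrightarrow> (\<forall>v\<in>B. a v = 0)"
    using assms unfolding lin_indep_def by blast
next
  assume H: "\<forall>a. (\<Sum>v\<in>B. sc (a v) v) = 0 \<longrightarrow> (\<forall>v\<in>B. a v = 0)"
  show "lin_indep sc B" unfolding lin_indep_def
  proof (intro allI impI ballI)
    fix S a v assume S: "finite S \<and> S \<subseteq> B \<and> (\<Sum>v\<in>S. sc (a v) v) = 0" and v: "v \<in> S"
    have "(\<Sum>v\<in>B. sc (if v \<in> S then a v else 0) v) = (\<Sum>v\<in>S. sc (if v \<in> S then a v else 0) v)"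
      by (rule sum.mono_neutral_right[OF assms]) (use S in \<open>auto simp: sc_zerol\<close>)
    also have "\<dots> = 0" using S by simp
    finally have "\<forall>v\<in>B. (if v \<in> S then a v else 0) = 0" using H[rule_format, of "\<lambda>v. if v \<in> S then a v else 0"] by blast
    moreover have "v \<in> B" using v S by blast
    ultimately show "a v = 0" using v by force
  qed
qed

lemma coef_unique:
  assumes "finite B" "lin_indep sc B" "(\<Sum>v\<in>B. sc (a v) v) = (\<Sum>v\<in>B. sc (c v) v)" "v \<in> B"
  shows "a v = c v"
proof -
  have "(\<Sum>v\<in>B. sc (a v - c v) v) = 0"
    using assms(3) by (simp add: sc_diffl sum_subtractf)
  moreover have H: "\<forall>a. (\<Sum>v\<in>B. sc (a v) v) = 0 \<longrightarrow> (\<forall>v\<in>B. a v = 0)"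
    using assms(2) indep_fin[OF assms(1)] by simp
  ultimately have "\<forall>v\<in>B. a v - c v = 0" using H[rule_format, of "\<lambda>v. a v - c v"] by simp
  then show ?thesis using assms(4) by simp
qed

lemma indep_nz: "lin_indep sc B \<Longrightarrow> 0 \<notin> B"
proof
  assume a: "lin_indep sc B" "0 \<in> B"
  have "(\<Sum>v\<in>{0}. sc ((\<lambda>_. 1::'f) v) v) = 0" by (simp add: sc_zeror)
  moreover have "finite {0} \<and> {0} \<subseteq> B" using a by auto
  ultimately have "\<forall>v\<in>{0}. (\<lambda>_. 1::'f) v = 0"
    using a(1)[unfolded lin_indep_def, rule_format, of "{0}" "\<lambda>_. 1"] by blast
  then show False by simp
qed

lemma indep_subset: "lin_indep sc B \<Longrightarrow> C \<subseteq> B \<Longrightarrow> lin_indep sc C"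
  unfolding lin_indep_def by blast

end


context GS begin

definition subsp :: "'v set \<Rightarrow> bool" where
  "subsp W \<longleftrightarrow> 0 \<in> W \<and> (\<forall>x\<in>W. \<forall>y\<in>W. x + y \<in> W) \<and> (\<forall>a. \<forall>x\<in>W. sc a x \<in> W)"

definition hlin :: "'v set \<Rightarrow> ('v \<Rightarrow> 'f) \<Rightarrow> bool" where
  "hlin W f \<longleftrightarrow> (\<forall>x\<in>W. \<forall>y\<in>W. f (x + y) = f x + f y) \<and> (\<forall>a. \<forall>x\<in>W. f (sc a x) = a * f x) \<and>
     (\<exists>\<eta>. \<forall>\<gamma>. \<forall>x\<in>W \<inter> Vg \<gamma>. f x \<in> Fg (\<gamma> + \<eta>))"

lemma subsp_diff: "subsp W \<Longrightarrow> x \<in> W \<Longrightarrow> y \<in> W \<Longrightarrow> x - y \<in> W"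
  unfolding subsp_def using sc_negl[of 1 y] sc_one[of y] by (metis diff_conv_add_uminus)

lemma subsp_sc: "subsp W \<Longrightarrow> x \<in> W \<Longrightarrow> sc a x \<in> W" unfolding subsp_def by auto

lemma hlin_sc: "hlin W f \<Longrightarrow> x \<in> W \<Longrightarrow> f (sc a x) = a * f x" unfolding hlin_def by auto

lemma hlin_diff: assumes "subsp W" "hlin W f" "x \<in> W" "y \<in> W" shows "f (x - y) = f x - f y"
proof -
  have "x - y \<in> W" using subsp_diff assms by auto
  have add: "\<forall>x\<in>W. \<forall>y\<in>W. f (x + y) = f x + f y" using assms(2) unfolding hlin_def by auto
  have "f ((x - y) + y) = f (x - y) + f y" using add \<open>x - y \<in> W\<close> assms(4) by blast
  then show ?thesis by simp
qed

lemma hlin_comb: assumes "subsp W" "hlin W f" "x \<in> W" "y \<in> W"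
  shows "f (x - sc c y) = f x - c * f y"
  using hlin_diff[OF assms(1,2,3) subsp_sc[OF assms(1,4)]] hlin_sc[OF assms(2,4)] by simp

lemma sum_if_sc: "finite D \<Longrightarrow> d \<in> D \<Longrightarrow> (\<Sum>v\<in>D. sc (if v = d then c else 0) (g v)) = sc c (g d)"
proof -
  assume "finite D" "d \<in> D"
  have "(\<Sum>v\<in>D. sc (if v = d then c else 0) (g v)) = (\<Sum>v\<in>D. if v = d then sc c (g v) else 0)"
    by (rule sum.cong) (auto simp: sc_zerol)
  then show ?thesis using \<open>finite D\<close> \<open>d \<in> D\<close> by (simp add: sum.delta')
qed

lemma K1:
  assumes W: "subsp W" and D: "finite D" "D \<subseteq> W" "lin_indep sc D" "\<forall>d\<in>D. homogeneous Vg d"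
    and f: "hlin W f"
  shows "\<exists>D'. finite D' \<and> D' \<subseteq> W \<and> lin_indep sc D' \<and> (\<forall>d\<in>D'. homogeneous Vg d) \<and>
     card D \<le> card D' + 1 \<and> (\<forall>x\<in>D'. f x = 0) \<and> (\<forall>x\<in>D'. \<exists>d\<in>D. \<exists>d0\<in>D. \<exists>c. x = d - sc c d0)"
proof (cases "\<forall>d\<in>D. f d = 0")
  case True
  have "\<forall>x\<in>D. \<exists>d\<in>D. \<exists>d0\<in>D. \<exists>c. x = d - sc c d0"
    by (metis diff_zero sc_zerol)
  then show ?thesis using True D by (intro exI[of _ D]) auto
next
  case False
  then obtain d0 where d0: "d0 \<in> D" "f d0 \<noteq> 0" by auto
  obtain \<delta>0 where \<delta>0: "d0 \<in> Vg \<delta>0" using D(4) d0 unfolding homogeneous_def by auto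
  obtain \<eta> where \<eta>: "\<And>\<gamma> x. x \<in> W \<Longrightarrow> x \<in> Vg \<gamma> \<Longrightarrow> f x \<in> Fg (\<gamma> + \<eta>)"
    using f unfolding hlin_def by blast
  have fd0: "f d0 \<in> Fg (\<delta>0 + \<eta>)" using \<eta> \<delta>0 d0 D(2) by auto
  obtain i where i: "i \<in> Fg (- (\<delta>0 + \<eta>))" "f d0 * i = 1" using inv_hom[OF fd0 d0(2)] by auto
  define \<phi> where "\<phi> d = d - sc (f d * i) d0" for d
  define D1 where "D1 = D - {d0}"
  have fD1: "finite D1" using D(1) unfolding D1_def by auto
  have D1W: "\<And>d. d \<in> D1 \<Longrightarrow> d \<in> W" using D(2) unfolding D1_def by auto
  have d0W: "d0 \<in> W" using D(2) d0 by auto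
  have ind: "\<forall>d\<in>D1. a d = 0" if a: "(\<Sum>d\<in>D1. sc (a d) (\<phi> d)) = 0" for a
  proof -
    define s where "s = (\<Sum>d\<in>D1. a d * (f d * i))"
    define a' where "a' v = (if v = d0 then - s else a v)" for v
    have "(\<Sum>d\<in>D1. sc (a d) (\<phi> d)) = (\<Sum>d\<in>D1. sc (a d) d - sc (a d * (f d * i)) d0)"
      unfolding \<phi>_def by (simp add: sc_diffr sc_mult)
    also have "\<dots> = (\<Sum>d\<in>D1. sc (a d) d) - sc s d0"
      unfolding s_def by (simp add: sum_subtractf sc_suml)
    finally have e1: "(\<Sum>d\<in>D1. sc (a d) d) - sc s d0 = 0" using a by simp
    have "(\<Sum>v\<in>D. sc (a' v) v) = sc (a' d0) d0 + (\<Sum>v\<in>D1. sc (a' v) v)"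
      unfolding D1_def using D(1) d0(1) by (simp add: sum.remove)
    also have "(\<Sum>v\<in>D1. sc (a' v) v) = (\<Sum>v\<in>D1. sc (a v) v)"
      by (rule sum.cong) (auto simp: a'_def D1_def)
    finally have "(\<Sum>v\<in>D. sc (a' v) v) = 0" using e1 by (simp add: a'_def sc_negl)
    moreover have H: "\<forall>a. (\<Sum>v\<in>D. sc (a v) v) = 0 \<longrightarrow> (\<forall>v\<in>D. a v = 0)"
      using D(3) indep_fin[OF D(1)] by simp
    ultimately have "\<forall>v\<in>D. a' v = 0" using H[rule_format, of a'] by simp
    then show ?thesis
    proof (intro ballI)
      fix d assume "\<forall>v\<in>D. a' v = 0" "d \<in> D1"
      then have "d \<in> D" "d \<noteq> d0" "a' d = 0" unfolding D1_def by auto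
      then show "a d = 0" unfolding a'_def by simp
    qed
  qed
  have inj: "inj_on \<phi> D1"
  proof (rule inj_onI, rule ccontr)
    fix d d' assume dd: "d \<in> D1" "d' \<in> D1" "\<phi> d = \<phi> d'" "d \<noteq> d'"
    define a where "a v = (if v = d then 1 else 0) + (if v = d' then -1 else (0::'f))" for v
    have "(\<Sum>v\<in>D1. sc (a v) (\<phi> v)) =
        (\<Sum>v\<in>D1. sc (if v = d then 1 else 0) (\<phi> v)) + (\<Sum>v\<in>D1. sc (if v = d' then -1 else 0) (\<phi> v))"
      unfolding a_def by (simp add: sc_addl sum.distrib)
    also have "\<dots> = 0" using dd fD1 by (simp add: sum_if_sc sc_negl sc_one)
    finally have "\<forall>d\<in>D1. a d = 0" using ind by blast
    then show False using dd unfolding a_def by auto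
  qed
  define D' where "D' = \<phi> ` D1"
  have "finite D'" using fD1 unfolding D'_def by auto
  moreover have D'W: "D' \<subseteq> W" unfolding D'_def \<phi>_def
    using D1W d0W subsp_diff[OF W] subsp_sc[OF W] by auto
  moreover have "lin_indep sc D'"
    unfolding indep_fin[OF \<open>finite D'\<close>]
  proof (intro allI impI)
    fix a assume "(\<Sum>v\<in>D'. sc (a v) v) = 0"
    then have "(\<Sum>d\<in>D1. sc (a (\<phi> d)) (\<phi> d)) = 0"
      unfolding D'_def using sum.reindex[OF inj, of "\<lambda>v. sc (a v) v"] by simp
    then show "\<forall>v\<in>D'. a v = 0" using ind[of "\<lambda>d. a (\<phi> d)"] unfolding D'_def by auto
  qed
  moreover have "\<forall>d\<in>D'. homogeneous Vg d"
  proof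
    fix x assume "x \<in> D'"
    then obtain d where d: "d \<in> D1" "x = \<phi> d" unfolding D'_def by auto
    obtain \<delta> where \<delta>: "d \<in> Vg \<delta>" using D(4) d(1) unfolding D1_def homogeneous_def by auto
    have "f d \<in> Fg (\<delta> + \<eta>)" using \<eta> \<delta> D1W d(1) by auto
    then have "f d * i \<in> Fg (\<delta> + \<eta> + - (\<delta>0 + \<eta>))" using mulF i(1) by blast
    then have "sc (f d * i) d0 \<in> Vg (\<delta> + \<eta> + - (\<delta>0 + \<eta>) + \<delta>0)" using sc_hom \<delta>0 by blast
    moreover have "\<delta> + \<eta> + - (\<delta>0 + \<eta>) + \<delta>0 = \<delta>" by (simp add: algebra_simps)
    ultimately have "sc (f d * i) d0 \<in> Vg \<delta>" by simp
    then have "x \<in> Vg \<delta>" using d \<delta> gr_diff[OF grV] unfolding \<phi>_def by auto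
    then show "homogeneous Vg x" unfolding homogeneous_def by auto
  qed
  moreover have "card D \<le> card D' + 1"
  proof -
    have "card D' = card D1" unfolding D'_def using card_image[OF inj] .
    also have "card D1 = card D - 1" unfolding D1_def using d0(1) D(1) by simp
    finally show ?thesis by simp
  qed
  moreover have "\<forall>x\<in>D'. f x = 0"
  proof
    fix x assume "x \<in> D'"
    then obtain d where d: "d \<in> D1" "x = \<phi> d" unfolding D'_def by auto
    have "f x = f d - f d * i * f d0" unfolding d(2) \<phi>_def
      using hlin_comb[OF W f D1W[OF d(1)] d0W] by simp
    also have "\<dots> = f d - f d * (f d0 * i)" by (simp add: ac_simps)
    finally show "f x = 0" using i(2) by simp
  qed
  moreover have "\<forall>x\<in>D'. \<exists>d\<in>D. \<exists>d0\<in>D. \<exists>c. x = d - sc c d0"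
    unfolding D'_def \<phi>_def D1_def using d0(1) by blast
  ultimately show ?thesis by blast
qed

lemma K:
  assumes W: "subsp W" and Fs: "finite Fs" "\<forall>f\<in>Fs. hlin W f"
  shows "finite D \<Longrightarrow> D \<subseteq> W \<Longrightarrow> lin_indep sc D \<Longrightarrow> \<forall>d\<in>D. homogeneous Vg d \<Longrightarrow>
    \<exists>D'. finite D' \<and> D' \<subseteq> W \<and> lin_indep sc D' \<and> (\<forall>d\<in>D'. homogeneous Vg d) \<and>
     card D \<le> card D' + card Fs \<and> (\<forall>f\<in>Fs. \<forall>x\<in>D'. f x = 0)"
  using Fs
proof (induction Fs rule: finite_induct)
  case empty
  then show ?case by (intro exI[of _ D]) auto
next
  case (insert f Fs)
  obtain D1 where D1: "finite D1" "D1 \<subseteq> W" "lin_indep sc D1" "\<forall>d\<in>D1. homogeneous Vg d"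
     "card D \<le> card D1 + card Fs" "\<forall>g\<in>Fs. \<forall>x\<in>D1. g x = 0"
    using insert by auto
  have hf: "hlin W f" using insert by auto
  obtain D2 where D2: "finite D2" "D2 \<subseteq> W" "lin_indep sc D2" "\<forall>d\<in>D2. homogeneous Vg d"
     "card D1 \<le> card D2 + 1" "\<forall>x\<in>D2. f x = 0" "\<forall>x\<in>D2. \<exists>d\<in>D1. \<exists>d0\<in>D1. \<exists>c. x = d - sc c d0"
    using K1[OF W D1(1-4) hf] by blast
  have "\<forall>g\<in>Fs. \<forall>x\<in>D2. g x = 0"
  proof (intro ballI)
    fix g x assume g: "g \<in> Fs" and x: "x \<in> D2"
    then obtain d d0 c where dd: "d \<in> D1" "d0 \<in> D1" "x = d - sc c d0" using D2(7) by blast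
    have hg: "hlin W g" using insert g by auto
    have "g x = g d - c * g d0" using hlin_comb[OF W hg, of d d0 c] g dd D1(2) by auto
    then show "g x = 0" using D1(6) g dd by auto
  qed
  then show ?case using D2 D1(5) insert(2) \<open>finite Fs\<close> by (intro exI[of _ D2]) auto
qed

end


context GS begin

definition coord :: "'v set \<Rightarrow> 'v \<Rightarrow> 'v \<Rightarrow> 'f" where
  "coord E e x = (SOME a. x = (\<Sum>v\<in>E. sc (a v) v)) e"

lemma coord_rep: "finite E \<Longrightarrow> x \<in> lin_span sc E \<Longrightarrow> x = (\<Sum>v\<in>E. sc (coord E v x) v)"
proof -
  assume "finite E" "x \<in> lin_span sc E"
  then have "\<exists>a. x = (\<Sum>v\<in>E. sc (a v) v)" using span_fin by auto
  then have "x = (\<Sum>v\<in>E. sc ((SOME a. x = (\<Sum>v\<in>E. sc (a v) v)) v) v)" by (rule someI_ex)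
  then show ?thesis unfolding coord_def .
qed

lemma coord_eq: assumes "finite E" "lin_indep sc E" "x = (\<Sum>v\<in>E. sc (a v) v)" "e \<in> E"
  shows "coord E e x = a e"
proof -
  have "x \<in> lin_span sc E" unfolding span_fin[OF assms(1)] using assms(3) by blast
  then have "(\<Sum>v\<in>E. sc (coord E v x) v) = x" by (rule coord_rep[OF assms(1), symmetric])
  also have "\<dots> = (\<Sum>v\<in>E. sc (a v) v)" by (rule assms(3))
  finally have "(\<Sum>v\<in>E. sc (coord E v x) v) = (\<Sum>v\<in>E. sc (a v) v)" .
  then show ?thesis by (rule coef_unique[OF assms(1,2) _ assms(4)])
qed

lemma span_subsp: "finite E \<Longrightarrow> subsp (lin_span sc E)"
  unfolding subsp_def
proof (intro conjI ballI allI)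
  assume f: "finite E"
  have "\<exists>a. 0 = (\<Sum>v\<in>E. sc (a v) v)" by (rule exI[of _ "\<lambda>_. 0"]) (simp add: sc_zerol)
  then show "0 \<in> lin_span sc E" using span_fin[OF f, of 0] by simp
next
  fix x y assume f: "finite E" and x: "x \<in> lin_span sc E" and y: "y \<in> lin_span sc E"
  obtain a c where "x = (\<Sum>v\<in>E. sc (a v) v)" "y = (\<Sum>v\<in>E. sc (c v) v)" using x y span_fin[OF f] by auto
  then have "x + y = (\<Sum>v\<in>E. sc (a v + c v) v)" by (simp add: sc_addl sum.distrib)
  then show "x + y \<in> lin_span sc E" unfolding span_fin[OF f] by (intro exI[of _ "\<lambda>v. a v + c v"])
next
  fix k x assume f: "finite E" and x: "x \<in> lin_span sc E"
  obtain a where "x = (\<Sum>v\<in>E. sc (a v) v)" using x span_fin[OF f] by auto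
  then have "sc k x = (\<Sum>v\<in>E. sc (k * a v) v)" by (simp add: sc_sumr sc_mult)
  then show "sc k x \<in> lin_span sc E" unfolding span_fin[OF f] by (intro exI[of _ "\<lambda>v. k * a v"])
qed

lemma coord_hlin:
  assumes E: "finite E" "lin_indep sc E" "\<forall>v\<in>E. homogeneous Vg v" and e: "e \<in> E"
  shows "hlin (lin_span sc E) (coord E e)"
  unfolding hlin_def
proof (intro conjI ballI allI)
  fix x y assume x: "x \<in> lin_span sc E" and y: "y \<in> lin_span sc E"
  have "x + y = (\<Sum>v\<in>E. sc (coord E v x) v) + (\<Sum>v\<in>E. sc (coord E v y) v)"
    by (rule arg_cong2[where f="(+)", OF coord_rep[OF E(1) x] coord_rep[OF E(1) y]])
  also have "\<dots> = (\<Sum>v\<in>E. sc (coord E v x + coord E v y) v)" by (simp add: sc_addl sum.distrib)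
  finally have "x + y = (\<Sum>v\<in>E. sc (coord E v x + coord E v y) v)" .
  then have "coord E e (x + y) = (\<lambda>v. coord E v x + coord E v y) e" by (rule coord_eq[OF E(1,2) _ e])
  then show "coord E e (x + y) = coord E e x + coord E e y" by simp
next
  fix k x assume x: "x \<in> lin_span sc E"
  have "sc k x = sc k (\<Sum>v\<in>E. sc (coord E v x) v)" by (rule arg_cong[OF coord_rep[OF E(1) x]])
  also have "\<dots> = (\<Sum>v\<in>E. sc (k * coord E v x) v)" by (simp add: sc_sumr sc_mult)
  finally have "sc k x = (\<Sum>v\<in>E. sc (k * coord E v x) v)" .
  then have "coord E e (sc k x) = (\<lambda>v. k * coord E v x) e" by (rule coord_eq[OF E(1,2) _ e])
  then show "coord E e (sc k x) = k * coord E e x" by simp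
next
  define deg where "deg v = (SOME \<delta>. v \<in> Vg \<delta>)" for v
  have deg: "v \<in> Vg (deg v)" if "v \<in> E" for v
  proof -
    have "\<exists>\<delta>. v \<in> Vg \<delta>" using E(3) that unfolding homogeneous_def by auto
    then show ?thesis unfolding deg_def by (rule someI_ex)
  qed
  show "\<exists>\<eta>. \<forall>\<gamma>. \<forall>x\<in>lin_span sc E \<inter> Vg \<gamma>. coord E e x \<in> Fg (\<gamma> + \<eta>)"
  proof (intro exI allI ballI)
    fix \<gamma> x assume x: "x \<in> lin_span sc E \<inter> Vg \<gamma>"
    have xr: "x = (\<Sum>v\<in>E. sc (coord E v x) v)" by (rule coord_rep[OF E(1)]) (use x in auto)
    have "x = hcomp Vg \<gamma> x" using x hc_hom[OF grV, of x \<gamma> \<gamma>] by simp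
    also have "\<dots> = hcomp Vg \<gamma> (\<Sum>v\<in>E. sc (coord E v x) v)"
      by (rule arg_cong[OF xr])
    also have "\<dots> = (\<Sum>v\<in>E. hcomp Vg \<gamma> (sc (coord E v x) v))"
      by (rule hc_sum[OF grV])
    also have "\<dots> = (\<Sum>v\<in>E. sc (hcomp Fg (\<gamma> - deg v) (coord E v x)) v)"
      by (rule sum.cong[OF refl]) (rule hc_sc[OF deg])
    finally have eq: "coord E e x = hcomp Fg (\<gamma> - deg e) (coord E e x)"
      by (rule coord_eq[OF E(1,2) _ e])
    have h: "hcomp Fg (\<gamma> - deg e) (coord E e x) \<in> Fg (\<gamma> - deg e)" by (rule hc_mem[OF grF])
    have "coord E e x \<in> Fg (\<gamma> - deg e)" using h unfolding eq[symmetric] .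
    then show "coord E e x \<in> Fg (\<gamma> + - deg e)" by simp
  qed
qed

lemma dim_le:
  assumes D: "finite D" "hbasis Vg sc W D" and E: "finite E" "hbasis Vg sc W E"
  shows "card D \<le> card E"
proof -
  have WE: "W = lin_span sc E" using E(2) unfolding hbasis_def by auto
  have Eh: "lin_indep sc E" "\<forall>v\<in>E. homogeneous Vg v" using E(2) unfolding hbasis_def by auto
  let ?Fs = "(\<lambda>e. coord E e) ` E"
  have Fs: "finite ?Fs" "\<forall>f\<in>?Fs. hlin W f" using E(1) coord_hlin[OF E(1) Eh] WE by auto
  have Dh: "D \<subseteq> W" "lin_indep sc D" "\<forall>d\<in>D. homogeneous Vg d" using D(2) unfolding hbasis_def by auto
  obtain D' where D': "finite D'" "D' \<subseteq> W" "lin_indep sc D'" "card D \<le> card D' + card ?Fs"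
     "\<forall>f\<in>?Fs. \<forall>x\<in>D'. f x = 0"
    using K[OF span_subsp[OF E(1)] Fs(1) Fs(2)[unfolded WE] D(1) Dh(1)[unfolded WE] Dh(2,3)] WE by blast
  have "D' = {}"
  proof (rule ccontr)
    assume "D' \<noteq> {}"
    then obtain x where x: "x \<in> D'" by auto
    have "x = (\<Sum>v\<in>E. sc (coord E v x) v)" by (rule coord_rep[OF E(1)]) (use x D'(2) WE in auto)
    also have "\<dots> = (\<Sum>v\<in>E. sc 0 v)" using D'(5) x by (intro sum.cong) auto
    finally have "x = 0" by (simp add: sc_zerol)
    then show False using indep_nz[OF D'(3)] x by auto
  qed
  then show ?thesis using D'(4) card_image_le[OF E(1), of "\<lambda>e. coord E e"] by simp
qed

lemma gdim_eq: assumes "finite B" "hbasis Vg sc W B" shows "gdim Vg sc W = card B"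
proof -
  have ex: "\<exists>B. finite B \<and> hbasis Vg sc W B" using assms by blast
  let ?B = "SOME B. finite B \<and> hbasis Vg sc W B"
  have "finite ?B \<and> hbasis Vg sc W ?B" using someI_ex[OF ex] .
  then have "card ?B \<le> card B" "card B \<le> card ?B" using dim_le assms by auto
  then have "card ?B = card B" by simp
  then show ?thesis unfolding gdim_def by simp
qed

end


lemma bilin_addl: "bilin_on sc UNIV f \<Longrightarrow> f (x + y) z = f x z + f y z" unfolding bilin_on_def by auto
lemma bilin_addr: "bilin_on sc UNIV f \<Longrightarrow> f x (y + z) = f x y + f x z" unfolding bilin_on_def by auto
lemma bilin_scl: "bilin_on sc UNIV f \<Longrightarrow> f (sc a x) z = a * f x z" unfolding bilin_on_def by auto
lemma bilin_scr: "bilin_on sc UNIV f \<Longrightarrow> f x (sc a z) = a * f x z" unfolding bilin_on_def by auto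
lemma bilin_mono: "bilin_on sc UNIV f \<Longrightarrow> bilin_on sc W f" unfolding bilin_on_def by auto
lemma shifted_mono: "shifted_on Fg Vg e UNIV f \<Longrightarrow> shifted_on Fg Vg e W f" unfolding shifted_on_def by auto
lemma shifted_app: "shifted_on Fg Vg e UNIV f \<Longrightarrow> x \<in> Vg \<gamma> \<Longrightarrow> y \<in> Vg \<delta> \<Longrightarrow> f x y \<in> Fg (\<gamma> + \<delta> + e)"
  unfolding shifted_on_def by auto

context GS begin

lemma orth:
  assumes bil: "bilin_on sc UNIV f" and sh: "shifted_on Fg Vg e UNIV f"
    and x: "x \<in> Vcos Vg G" and y: "y \<in> Vcos Vg H"
    and GH: "\<And>\<gamma> \<delta>. \<gamma> \<in> G \<Longrightarrow> \<delta> \<in> H \<Longrightarrow> \<gamma> + \<delta> + e \<notin> GammaF Fg"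
  shows "f x y = 0"
proof -
  let ?Sx = "{\<gamma>. hcomp Vg \<gamma> x \<noteq> 0}" and ?Sy = "{\<gamma>. hcomp Vg \<gamma> y \<noteq> 0}"
  have "f x y = f (\<Sum>\<gamma>\<in>?Sx. hcomp Vg \<gamma> x) (\<Sum>\<delta>\<in>?Sy. hcomp Vg \<delta> y)"
    by (rule arg_cong2[where f=f, OF hc_sum0[OF grV] hc_sum0[OF grV]])
  also have "\<dots> = (\<Sum>\<gamma>\<in>?Sx. f (hcomp Vg \<gamma> x) (\<Sum>\<delta>\<in>?Sy. hcomp Vg \<delta> y))"
    by (rule additive_sum[of "\<lambda>u. f u _"]) (rule bilin_addl[OF bil])
  also have "\<dots> = (\<Sum>\<gamma>\<in>?Sx. \<Sum>\<delta>\<in>?Sy. f (hcomp Vg \<gamma> x) (hcomp Vg \<delta> y))"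
    by (rule sum.cong[OF refl], rule additive_sum[of "f _"], rule bilin_addr[OF bil])
  also have "\<dots> = 0"
  proof (intro sum.neutral ballI)
    fix \<gamma> \<delta> assume g: "\<gamma> \<in> ?Sx" and d: "\<delta> \<in> ?Sy"
    have "\<gamma> \<in> G" "\<delta> \<in> H" using g d Vcos_supp x y by auto
    then have "\<gamma> + \<delta> + e \<notin> GammaF Fg" using GH by auto
    then show "f (hcomp Vg \<gamma> x) (hcomp Vg \<delta> y) = 0"
      using F_out shifted_app[OF sh hc_mem[OF grV] hc_mem[OF grV]] by blast
  qed
  finally show ?thesis .
qed

lemma Vcos_graded_subspace: "stable G \<Longrightarrow> graded_subspace Vg sc (Vcos Vg G)"
  unfolding graded_subspace_def using Vcos_zero Vcos_add Vcos_sc Vcos_hc by blast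

lemma Vcos_subsp: "stable G \<Longrightarrow> subsp (Vcos Vg G)"
  unfolding subsp_def using Vcos_zero Vcos_add Vcos_sc by blast

lemma stable_uminus: "stable G \<Longrightarrow> stable (- G)"
  unfolding stable_def
proof (intro ballI, rule ccontr)
  fix \<gamma> \<delta> assume st: "\<forall>\<gamma>\<in>G. \<forall>\<delta>\<in>GammaF Fg. \<gamma> + \<delta> \<in> G" and g: "\<gamma> \<in> - G" and d: "\<delta> \<in> GammaF Fg"
    and c: "\<gamma> + \<delta> \<notin> - G"
  then have "\<gamma> + \<delta> + - \<delta> \<in> G" using Gamma_uminus by blast
  then show False using g by simp
qed

lemma homog_Vcos_iff: assumes "v \<in> Vg \<delta>" "v \<noteq> 0" shows "v \<in> Vcos Vg G \<longleftrightarrow> \<delta> \<in> G"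
proof
  assume "v \<in> Vcos Vg G"
  moreover have "hcomp Vg \<delta> v \<noteq> 0" using assms hc_hom[OF grV] by auto
  ultimately show "\<delta> \<in> G" by (rule Vcos_supp)
qed (use assms Vcos_hom in auto)

lemma Vcos_basis:
  assumes st: "stable G" and B: "finite B" "hbasis Vg sc UNIV B"
  shows "hbasis Vg sc (Vcos Vg G) {v\<in>B. v \<in> Vcos Vg G}"
proof -
  let ?BG = "{v\<in>B. v \<in> Vcos Vg G}"
  have fBG: "finite ?BG" using B(1) by auto
  have Bi: "lin_indep sc B" "\<forall>v\<in>B. homogeneous Vg v" "lin_span sc B = UNIV" using B(2) unfolding hbasis_def by auto
  have "lin_span sc ?BG = Vcos Vg G"
  proof
    show "lin_span sc ?BG \<subseteq> Vcos Vg G"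
    proof
      fix x assume "x \<in> lin_span sc ?BG"
      then obtain a where "x = (\<Sum>v\<in>?BG. sc (a v) v)" using span_fin[OF fBG] by auto
      moreover have "(\<Sum>v\<in>?BG. sc (a v) v) \<in> Vcos Vg G" by (rule Vcos_sum) (auto intro: Vcos_sc[OF st])
      ultimately show "x \<in> Vcos Vg G" by simp
    qed
  next
    show "Vcos Vg G \<subseteq> lin_span sc ?BG"
    proof
      fix x assume x: "x \<in> Vcos Vg G"
      have "x \<in> lin_span sc B" using Bi by auto
      then obtain a where xa: "x = (\<Sum>v\<in>B. sc (a v) v)" using span_fin[OF B(1)] by auto
      define y where "y = (\<Sum>v\<in>?BG. sc (a v) v)"
      define z where "z = (\<Sum>v\<in>B - ?BG. sc (a v) v)"
      have "(\<Sum>v\<in>B. sc (a v) v) = (\<Sum>v\<in>B - ?BG. sc (a v) v) + (\<Sum>v\<in>?BG. sc (a v) v)"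
        by (rule sum.subset_diff[OF _ B(1)]) auto
      then have "x = y + z" unfolding xa y_def z_def by (simp add: add.commute)
      have yG: "y \<in> Vcos Vg G" unfolding y_def by (rule Vcos_sum) (auto intro: Vcos_sc[OF st])
      have zG: "z \<in> Vcos Vg (- G)" unfolding z_def
      proof (rule Vcos_sum)
        fix v assume v: "v \<in> B - ?BG"
        then obtain \<delta> where d: "v \<in> Vg \<delta>" using Bi unfolding homogeneous_def by auto
        have "\<delta> \<notin> G" using v d Vcos_hom by auto
        then have "\<delta> \<in> - G" by simp
        then show "sc (a v) v \<in> Vcos Vg (- G)" by (rule Vcos_sc_hom[OF stable_uminus[OF st] d])
      qed
      have "z = x - y" using \<open>x = y + z\<close> by simp
      then have "z \<in> Vcos Vg G" using x yG Vcos_diff by simp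
      then have "z = 0" using zG Vcos_disj[of G "- G"] by auto
      then have "\<exists>a. x = (\<Sum>v\<in>?BG. sc (a v) v)" using \<open>x = y + z\<close> unfolding y_def by auto
      then show "x \<in> lin_span sc ?BG" using span_fin[OF fBG] by simp
    qed
  qed
  then show ?thesis unfolding hbasis_def using Bi indep_subset[OF Bi(1)] by auto
qed

end

locale GSQ = GS Fg sc Vg
  for Fg :: "'g::ab_group_add \<Rightarrow> 'f::comm_ring_1 set"
    and sc :: "'f \<Rightarrow> 'v::ab_group_add \<Rightarrow> 'v"
    and Vg :: "'g \<Rightarrow> 'v set" +
  fixes \<epsilon> :: 'g and q :: "'v \<Rightarrow> 'f" and b :: "'v \<Rightarrow> 'v \<Rightarrow> 'f"
  assumes eps: "\<epsilon> \<in> GammaF Fg" and qs: "eps_qspace Fg sc Vg \<epsilon> UNIV q b"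
begin

lemma b_bil: "bilin_on sc UNIV b" using qs unfolding eps_qspace_def by auto
lemma p_bil: "bilin_on sc UNIV (polar q)" using qs unfolding eps_qspace_def by auto
lemma b_sh: "shifted_on Fg Vg \<epsilon> UNIV b" using qs unfolding eps_qspace_def by auto
lemma p_sh: "shifted_on Fg Vg 0 UNIV (polar q)" using qs unfolding eps_qspace_def by auto
lemma b_sym: "b x y = b y x" using qs unfolding eps_qspace_def by auto
lemma b_nd: "(\<And>y. b x y = 0) \<Longrightarrow> x = 0" using qs unfolding eps_qspace_def by auto
lemma q_sc: "q (sc a x) = a * a * q x" using qs unfolding eps_qspace_def by auto
lemma q_hom: "x \<in> Vg \<gamma> \<Longrightarrow> q x \<in> Fg (\<gamma> + \<gamma>)" using qs unfolding eps_qspace_def by auto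
lemma finB: "\<exists>B. finite B \<and> hbasis Vg sc UNIV B" using qs unfolding eps_qspace_def fin_dim_def by auto

definition barcl :: "'g set \<Rightarrow> 'g set \<Rightarrow> bool" where
  "barcl G G' \<longleftrightarrow> (\<forall>\<gamma>\<in>G. \<forall>\<delta>. \<gamma> + \<delta> + \<epsilon> \<in> GammaF Fg \<longrightarrow> \<delta> \<in> G')"

lemma b_rest_zero:
  assumes bc: "barcl G G'" and x: "x \<in> Vcos Vg G" and y: "\<And>y. y \<in> Vcos Vg G' \<Longrightarrow> b x y = 0"
  shows "x = 0"
proof (rule b_nd)
  fix y
  have "b x (proj G' y + (y - proj G' y)) = b x (proj G' y) + b x (y - proj G' y)"
    by (rule bilin_addr[OF b_bil])
  moreover have "b x (proj G' y) = 0" by (rule y[OF proj_mem])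
  moreover have "b x (y - proj G' y) = 0"
    by (rule orth[OF b_bil b_sh x proj_rest]) (use bc in \<open>auto simp: barcl_def\<close>)
  ultimately show "b x y = 0" by simp
qed

lemma pairing_le:
  assumes st: "stable G0" "stable G1" and bc: "barcl G0 G1"
    and D: "finite D" "hbasis Vg sc (Vcos Vg G0) D" and E: "finite E" "hbasis Vg sc (Vcos Vg G1) E"
  shows "card D \<le> card E"
proof -
  let ?W = "Vcos Vg G0"
  have W: "subsp ?W" by (rule Vcos_subsp[OF st(1)])
  have Eh: "E \<subseteq> Vcos Vg G1" "lin_indep sc E" "\<forall>v\<in>E. homogeneous Vg v" "lin_span sc E = Vcos Vg G1"
    using E(2) unfolding hbasis_def by auto
  let ?Fs = "(\<lambda>e x. b x e) ` E"
  have Fs: "finite ?Fs" using E(1) by auto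
  have hl: "\<forall>f\<in>?Fs. hlin ?W f"
  proof
    fix f assume "f \<in> ?Fs"
    then obtain e where e: "e \<in> E" "f = (\<lambda>x. b x e)" by auto
    obtain \<delta> where d: "e \<in> Vg \<delta>" using Eh(3) e unfolding homogeneous_def by auto
    have "\<forall>\<gamma>. \<forall>x\<in>?W \<inter> Vg \<gamma>. b x e \<in> Fg (\<gamma> + (\<delta> + \<epsilon>))"
      using shifted_app[OF b_sh _ d] by (simp add: add.assoc)
    then show "hlin ?W f" unfolding hlin_def e(2)
      using bilin_addl[OF b_bil] bilin_scl[OF b_bil] by blast
  qed
  have Dh: "D \<subseteq> ?W" "lin_indep sc D" "\<forall>d\<in>D. homogeneous Vg d" using D(2) unfolding hbasis_def by auto
  obtain D' where D': "finite D'" "D' \<subseteq> ?W" "lin_indep sc D'" "card D \<le> card D' + card ?Fs"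
     "\<forall>f\<in>?Fs. \<forall>x\<in>D'. f x = 0"
    using K[OF W Fs hl D(1) Dh] by blast
  have "D' = {}"
  proof (rule ccontr)
    assume "D' \<noteq> {}"
    then obtain x where x: "x \<in> D'" by auto
    have be: "b x e = 0" if "e \<in> E" for e using D'(5) x that by auto
    have "x = 0"
    proof (rule b_rest_zero[OF bc])
      show "x \<in> Vcos Vg G0" using x D'(2) by auto
    next
      fix y assume "y \<in> Vcos Vg G1"
      then have "y \<in> lin_span sc E" using Eh by auto
      then obtain a where ya: "y = (\<Sum>v\<in>E. sc (a v) v)" using span_fin[OF E(1)] by auto
      have "b x y = b x (\<Sum>v\<in>E. sc (a v) v)" by (rule arg_cong[OF ya])
      also have "\<dots> = (\<Sum>v\<in>E. b x (sc (a v) v))"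
        by (rule additive_sum[of "b x"]) (rule bilin_addr[OF b_bil])
      also have "\<dots> = 0" using be by (simp add: bilin_scr[OF b_bil])
      finally show "b x y = 0" .
    qed
    then show False using indep_nz[OF D'(3)] x by auto
  qed
  then show ?thesis using D'(4) card_image_le[OF E(1), of "\<lambda>e x. b x e"] by simp
qed

lemma q_zero0: "q 0 = 0" using q_sc[of 0 0] sc_zerol[of 0] by simp

lemma q_vanish:
  assumes G: "\<And>\<gamma> \<delta>. \<gamma> \<in> G \<Longrightarrow> \<delta> \<in> G \<Longrightarrow> \<gamma> + \<delta> \<notin> GammaF Fg" and x: "x \<in> Vcos Vg G"
  shows "q x = 0"
proof -
  have main: "finite S \<Longrightarrow> (\<forall>\<gamma>\<in>S. u \<gamma> \<in> Vg \<gamma> \<and> \<gamma> \<in> G) \<Longrightarrow> q (\<Sum>\<gamma>\<in>S. u \<gamma>) = 0" for S u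
  proof (induction S rule: finite_induct)
    case empty then show ?case by (simp add: q_zero0)
  next
    case (insert \<gamma> S)
    let ?r = "\<Sum>\<gamma>\<in>S. u \<gamma>"
    have u: "u \<gamma> \<in> Vg \<gamma>" "\<gamma> \<in> G" using insert by auto
    have "q (u \<gamma> + ?r) = polar q (u \<gamma>) ?r + q (u \<gamma>) + q ?r" unfolding polar_def by simp
    moreover have "q ?r = 0" using insert by auto
    moreover have "q (u \<gamma>) = 0" using F_out[OF _ q_hom[OF u(1)]] G[OF u(2) u(2)] by blast
    moreover have "polar q (u \<gamma>) ?r = 0"
    proof (rule orth[OF p_bil p_sh])
      show "u \<gamma> \<in> Vcos Vg G" by (rule Vcos_hom[OF u(2,1)])
      show "?r \<in> Vcos Vg G" using insert by (intro Vcos_sum) (auto intro: Vcos_hom)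
    qed (use G in auto)
    ultimately show ?case using insert by simp
  qed
  have "q x = q (\<Sum>\<gamma>\<in>{\<gamma>. hcomp Vg \<gamma> x \<noteq> 0}. hcomp Vg \<gamma> x)" by (rule arg_cong[OF hc_sum0[OF grV]])
  also have "\<dots> = 0" by (rule main[OF hc_finite[OF grV]]) (use x Vcos_supp hc_mem[OF grV] in blast)
  finally show ?thesis .
qed

lemma eps_qspace_sub:
  assumes st: "stable G" and bc: "barcl G G"
  shows "eps_qspace Fg sc Vg \<epsilon> (Vcos Vg G) q b"
proof -
  obtain B where B: "finite B" "hbasis Vg sc UNIV B" using finB by auto
  have fd: "fin_dim Vg sc (Vcos Vg G)" unfolding fin_dim_def using Vcos_basis[OF st B] B(1)
    by (intro exI[of _ "{v\<in>B. v \<in> Vcos Vg G}"]) auto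
  have nd: "\<forall>x\<in>Vcos Vg G. (\<forall>y\<in>Vcos Vg G. b x y = 0) \<longrightarrow> x = 0"
    using b_rest_zero[OF bc] by blast
  show ?thesis using qs fd nd Vcos_graded_subspace[OF st] unfolding eps_qspace_def
    by (auto intro: bilin_mono shifted_mono)
qed

lemma has_type_sub: "has_type T \<epsilon> UNIV q b \<Longrightarrow> 0 \<in> W \<Longrightarrow> has_type T \<epsilon> W q b"
  unfolding has_type_def by (cases T) auto

end


lemma finite_subsingleton: "(\<And>i j. i \<in> A \<Longrightarrow> j \<in> A \<Longrightarrow> i = j) \<Longrightarrow> finite A"
proof (cases "A = {}")
  case False
  then obtain a where "a \<in> A" by auto
  moreover assume "\<And>i j. i \<in> A \<Longrightarrow> j \<in> A \<Longrightarrow> i = j"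
  ultimately have "A \<subseteq> {a}" by auto
  then show ?thesis using finite_subset by auto
qed auto

context GS begin

lemma decomp_ex:
  assumes disj: "\<And>i j. i \<in> I \<Longrightarrow> j \<in> I \<Longrightarrow> i \<noteq> j \<Longrightarrow> g i \<inter> g j = {}"
    and w: "w \<in> Vcos Vg (\<Union>i\<in>I. g i)"
  defines "f \<equiv> \<lambda>i. if i \<in> I then proj (g i) w else 0"
  shows "(\<forall>i. i \<notin> I \<longrightarrow> f i = 0) \<and> finite {i. f i \<noteq> 0} \<and> (\<forall>i\<in>I. f i \<in> Vcos Vg (g i)) \<and>
         w = (\<Sum>i\<in>{i. f i \<noteq> 0}. f i)"
proof (intro conjI)
  show "\<forall>i. i \<notin> I \<longrightarrow> f i = 0" unfolding f_def by auto
  show "\<forall>i\<in>I. f i \<in> Vcos Vg (g i)" unfolding f_def by (auto intro: proj_mem)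
  let ?Sw = "{\<gamma>. hcomp Vg \<gamma> w \<noteq> 0}"
  have sub: "{i. f i \<noteq> 0} \<subseteq> (\<Union>\<gamma>\<in>?Sw. {i\<in>I. \<gamma> \<in> g i})"
  proof
    fix i assume "i \<in> {i. f i \<noteq> 0}"
    then have i: "i \<in> I" "proj (g i) w \<noteq> 0" unfolding f_def by (auto split: if_splits)
    then obtain \<delta> where "hcomp Vg \<delta> (proj (g i) w) \<noteq> 0" using hc_ext0[OF grV] by blast
    then have "\<delta> \<in> g i" "hcomp Vg \<delta> w \<noteq> 0" using hc_proj by (auto split: if_splits)
    then show "i \<in> (\<Union>\<gamma>\<in>?Sw. {i\<in>I. \<gamma> \<in> g i})" using i by auto
  qed
  have "finite (\<Union>\<gamma>\<in>?Sw. {i\<in>I. \<gamma> \<in> g i})"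
  proof (intro finite_UN_I)
    show "finite ?Sw" by (rule hc_finite[OF grV])
    fix \<gamma> show "finite {i\<in>I. \<gamma> \<in> g i}"
      by (rule finite_subsingleton) (use disj in blast)
  qed
  then show fin: "finite {i. f i \<noteq> 0}" using sub finite_subset by auto
  show "w = (\<Sum>i\<in>{i. f i \<noteq> 0}. f i)"
  proof (rule hc_ext[OF grV])
    fix \<delta>
    have "hcomp Vg \<delta> (\<Sum>i\<in>{i. f i \<noteq> 0}. f i) = (\<Sum>i\<in>{i. f i \<noteq> 0}. hcomp Vg \<delta> (f i))" by (rule hc_sum[OF grV])
    also have "\<dots> = (\<Sum>i\<in>{i. f i \<noteq> 0}. if \<delta> \<in> g i then hcomp Vg \<delta> w else 0)"
      by (rule sum.cong[OF refl]) (auto simp: f_def hc_proj hc_zero[OF grV] split: if_splits)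
    also have "\<dots> = hcomp Vg \<delta> w"
    proof (cases "hcomp Vg \<delta> w = 0")
      case True
      show ?thesis
      proof -
        have "(\<Sum>i\<in>{i. f i \<noteq> 0}. if \<delta> \<in> g i then hcomp Vg \<delta> w else 0) = 0"
        proof (rule sum.neutral, intro ballI)
          fix i show "(if \<delta> \<in> g i then hcomp Vg \<delta> w else 0) = 0" using True by simp
        qed
        then show ?thesis using True by simp
      qed
    next
      case False
      then have "\<delta> \<in> (\<Union>i\<in>I. g i)" using w Vcos_supp by blast
      then obtain i0 where i0: "i0 \<in> I" "\<delta> \<in> g i0" by auto
      have "hcomp Vg \<delta> (f i0) = hcomp Vg \<delta> w" using i0 by (simp add: f_def hc_proj)
      then have nz: "f i0 \<noteq> 0" using False hc_zero[OF grV] by auto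
      have "(\<Sum>i\<in>{i. f i \<noteq> 0}. if \<delta> \<in> g i then hcomp Vg \<delta> w else 0) =
            (\<Sum>i\<in>{i. f i \<noteq> 0}. if i = i0 then hcomp Vg \<delta> w else 0)"
      proof (rule sum.cong[OF refl])
        fix i assume "i \<in> {i. f i \<noteq> 0}"
        then have "i \<in> I" unfolding f_def by (auto split: if_splits)
        then have "\<delta> \<in> g i \<longleftrightarrow> i = i0" using disj[of i i0] i0 by auto
        then show "(if \<delta> \<in> g i then hcomp Vg \<delta> w else 0) = (if i = i0 then hcomp Vg \<delta> w else 0)" by simp
      qed
      also have "\<dots> = hcomp Vg \<delta> w" using fin nz by (simp add: sum.delta)
      finally show ?thesis .
    qed
    finally show "hcomp Vg \<delta> w = hcomp Vg \<delta> (\<Sum>i\<in>{i. f i \<noteq> 0}. f i)" by simp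
  qed
qed

lemma decomp_uniq:
  assumes disj: "\<And>i j. i \<in> I \<Longrightarrow> j \<in> I \<Longrightarrow> i \<noteq> j \<Longrightarrow> g i \<inter> g j = {}"
    and h: "(\<forall>i. i \<notin> I \<longrightarrow> h i = 0) \<and> finite {i. h i \<noteq> 0} \<and> (\<forall>i\<in>I. h i \<in> Vcos Vg (g i)) \<and>
         w = (\<Sum>i\<in>{i. h i \<noteq> 0}. h i)"
  shows "h = (\<lambda>i. if i \<in> I then proj (g i) w else 0)"
proof
  fix i
  show "h i = (if i \<in> I then proj (g i) w else 0)"
  proof (cases "i \<in> I")
    case False then show ?thesis using h by auto
  next
    case True
    have "h i = proj (g i) w"
    proof (rule hc_ext[OF grV])
      fix \<delta>
      show "hcomp Vg \<delta> (h i) = hcomp Vg \<delta> (proj (g i) w)"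
      proof (cases "\<delta> \<in> g i")
        case False
        then show ?thesis using h True Vcos_supp hc_proj by fastforce
      next
        case dg: True
        let ?S = "{i. h i \<noteq> 0}"
        have "hcomp Vg \<delta> w = hcomp Vg \<delta> (\<Sum>j\<in>?S. h j)" by (rule arg_cong[of _ _ "hcomp Vg \<delta>"]) (use h in blast)
        also have "\<dots> = (\<Sum>j\<in>?S. hcomp Vg \<delta> (h j))" by (rule hc_sum[OF grV])
        also have "\<dots> = (\<Sum>j\<in>?S. if j = i then hcomp Vg \<delta> (h i) else 0)"
        proof (rule sum.cong[OF refl])
          fix j assume "j \<in> ?S"
          then have j: "j \<in> I" using h by auto
          show "hcomp Vg \<delta> (h j) = (if j = i then hcomp Vg \<delta> (h i) else 0)"
          proof (cases "j = i")
            case False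
            then have "\<delta> \<notin> g j" using disj[OF True j] dg by auto
            then show ?thesis using False h j Vcos_supp by fastforce
          qed simp
        qed
        also have "\<dots> = hcomp Vg \<delta> (h i)"
          using h by (cases "h i = 0") (auto simp: sum.delta hc_zero[OF grV])
        finally show ?thesis using dg by (simp add: hc_proj)
      qed
    qed
    then show ?thesis using True by simp
  qed
qed

lemma decomp_family:
  assumes disj: "\<And>i j. i \<in> I \<Longrightarrow> j \<in> I \<Longrightarrow> i \<noteq> j \<Longrightarrow> g i \<inter> g j = {}"
    and S: "\<And>i. i \<in> I \<Longrightarrow> S i = Vcos Vg (g i)"
  shows "subsum I S = Vcos Vg (\<Union>i\<in>I. g i)"
    and "(\<And>i j \<gamma> \<delta>. i \<in> I \<Longrightarrow> j \<in> I \<Longrightarrow> i \<noteq> j \<Longrightarrow> \<gamma> \<in> g i \<Longrightarrow> \<delta> \<in> g j \<Longrightarrow> \<gamma> + \<delta> + e \<notin> GammaF Fg)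
       \<Longrightarrow> bilin_on sc UNIV bb \<Longrightarrow> shifted_on Fg Vg e UNIV bb
       \<Longrightarrow> orth_decomp bb (Vcos Vg (\<Union>i\<in>I. g i)) I S"
proof -
  show "subsum I S = Vcos Vg (\<Union>i\<in>I. g i)"
  proof
    show "subsum I S \<subseteq> Vcos Vg (\<Union>i\<in>I. g i)"
    proof
      fix w assume "w \<in> subsum I S"
      then obtain J f where J: "finite J" "J \<subseteq> I" "\<forall>i\<in>J. f i \<in> S i" "w = (\<Sum>i\<in>J. f i)"
        unfolding subsum_def by auto
      have "(\<Sum>i\<in>J. f i) \<in> Vcos Vg (\<Union>i\<in>I. g i)"
      proof (rule Vcos_sum)
        fix i assume "i \<in> J"
        then have "f i \<in> Vcos Vg (g i)" "g i \<subseteq> (\<Union>i\<in>I. g i)" using J S by auto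
        then show "f i \<in> Vcos Vg (\<Union>i\<in>I. g i)" using Vcos_mono by blast
      qed
      then show "w \<in> Vcos Vg (\<Union>i\<in>I. g i)" using J by simp
    qed
  next
    show "Vcos Vg (\<Union>i\<in>I. g i) \<subseteq> subsum I S"
    proof
      fix w assume w: "w \<in> Vcos Vg (\<Union>i\<in>I. g i)"
      let ?f = "\<lambda>i. if i \<in> I then proj (g i) w else 0"
      have H: "(\<forall>i. i \<notin> I \<longrightarrow> ?f i = 0) \<and> finite {i. ?f i \<noteq> 0} \<and> (\<forall>i\<in>I. ?f i \<in> Vcos Vg (g i)) \<and>
         w = (\<Sum>i\<in>{i. ?f i \<noteq> 0}. ?f i)" by (rule decomp_ex[OF disj w])
      have "{i. ?f i \<noteq> 0} \<subseteq> I" by (auto split: if_splits)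
      then show "w \<in> subsum I S" unfolding subsum_def using H S by blast
    qed
  qed
next
  assume orthc: "\<And>i j \<gamma> \<delta>. i \<in> I \<Longrightarrow> j \<in> I \<Longrightarrow> i \<noteq> j \<Longrightarrow> \<gamma> \<in> g i \<Longrightarrow> \<delta> \<in> g j \<Longrightarrow> \<gamma> + \<delta> + e \<notin> GammaF Fg"
    and bil: "bilin_on sc UNIV bb" and sh: "shifted_on Fg Vg e UNIV bb"
  show "orth_decomp bb (Vcos Vg (\<Union>i\<in>I. g i)) I S"
    unfolding orth_decomp_def
  proof (intro conjI ballI impI)
    fix i assume i: "i \<in> I"
    have "Vcos Vg (g i) \<subseteq> Vcos Vg (\<Union>i\<in>I. g i)" by (rule Vcos_mono) (use i in auto)
    then show "S i \<subseteq> Vcos Vg (\<Union>i\<in>I. g i)" using S[OF i] by simp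
  next
    fix w assume w: "w \<in> Vcos Vg (\<Union>i\<in>I. g i)"
    let ?f = "\<lambda>i. if i \<in> I then proj (g i) w else 0"
    have H: "(\<forall>i. i \<notin> I \<longrightarrow> ?f i = 0) \<and> finite {i. ?f i \<noteq> 0} \<and> (\<forall>i\<in>I. ?f i \<in> Vcos Vg (g i)) \<and>
         w = (\<Sum>i\<in>{i. ?f i \<noteq> 0}. ?f i)" by (rule decomp_ex[OF disj w])
    have S': "\<forall>i\<in>I. h i \<in> S i \<longleftrightarrow> h i \<in> Vcos Vg (g i)" for h using S by auto
    show "\<exists>!f. (\<forall>i. i \<notin> I \<longrightarrow> f i = 0) \<and> finite {i. f i \<noteq> 0} \<and> (\<forall>i\<in>I. f i \<in> S i) \<and> w = (\<Sum>i\<in>{i. f i \<noteq> 0}. f i)"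
      apply (rule ex_ex1I)
      subgoal using H S by (intro exI[of _ ?f]) simp
      subgoal premises p for x y
      proof -
        have a: "(\<forall>i. i \<notin> I \<longrightarrow> x i = 0) \<and> finite {i. x i \<noteq> 0} \<and> (\<forall>i\<in>I. x i \<in> Vcos Vg (g i)) \<and> w = (\<Sum>i\<in>{i. x i \<noteq> 0}. x i)"
          using p(1) S by auto
        have b: "(\<forall>i. i \<notin> I \<longrightarrow> y i = 0) \<and> finite {i. y i \<noteq> 0} \<and> (\<forall>i\<in>I. y i \<in> Vcos Vg (g i)) \<and> w = (\<Sum>i\<in>{i. y i \<noteq> 0}. y i)"
          using p(2) S by auto
        show "x = y" using decomp_uniq[OF disj a] decomp_uniq[OF disj b] by simp
      qed
      done
  next
    fix i j x y assume ij: "i \<in> I" "j \<in> I" "i \<noteq> j" and xy: "x \<in> S i" "y \<in> S j"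
    then show "bb x y = 0" using S ij orth[OF bil sh, of x "g i" y "g j"] orthc[OF ij] by auto
  qed
qed

end


context GSQ begin

abbreviation "GF \<equiv> GammaF Fg"
abbreviation "HH \<equiv> halfGammaF Fg"

lemma mem_coset: "\<delta> \<in> coset Fg \<gamma> \<longleftrightarrow> \<delta> - \<gamma> \<in> GF"
proof
  assume "\<delta> \<in> coset Fg \<gamma>"
  then obtain d where "\<delta> = \<gamma> + d" "d \<in> GF" unfolding coset_def by auto
  then show "\<delta> - \<gamma> \<in> GF" by simp
next
  assume a: "\<delta> - \<gamma> \<in> GF"
  have "\<delta> = \<gamma> + (\<delta> - \<gamma>)" by simp
  then show "\<delta> \<in> coset Fg \<gamma>" unfolding coset_def using a by blast
qed

lemma coset_self: "\<gamma> \<in> coset Fg \<gamma>" using mem_coset Gamma0 by simp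

lemma coset_eq_iff: "coset Fg \<gamma> = coset Fg \<gamma>' \<longleftrightarrow> \<gamma> - \<gamma>' \<in> GF"
proof
  assume "coset Fg \<gamma> = coset Fg \<gamma>'"
  then show "\<gamma> - \<gamma>' \<in> GF" using coset_self[of \<gamma>] mem_coset by auto
next
  assume a: "\<gamma> - \<gamma>' \<in> GF"
  show "coset Fg \<gamma> = coset Fg \<gamma>'"
  proof (rule set_eqI)
    fix \<delta>
    have "\<delta> - \<gamma>' = (\<delta> - \<gamma>) + (\<gamma> - \<gamma>')" by simp
    then show "\<delta> \<in> coset Fg \<gamma> \<longleftrightarrow> \<delta> \<in> coset Fg \<gamma>'" unfolding mem_coset
      using Gamma_add_iff[OF a, of "\<delta> - \<gamma>"] by simp
  qed
qed

lemma coset_disj: "coset Fg a \<noteq> coset Fg c \<Longrightarrow> coset Fg a \<inter> coset Fg c = {}"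
proof (rule ccontr)
  assume ne: "coset Fg a \<noteq> coset Fg c" and "coset Fg a \<inter> coset Fg c \<noteq> {}"
  then obtain \<xi> where "\<xi> - a \<in> GF" "\<xi> - c \<in> GF" unfolding mem_coset[symmetric] by auto
  then have "(\<xi> - c) - (\<xi> - a) \<in> GF" by (rule Gamma_diff[rotated])
  then have "a - c \<in> GF" by simp
  then show False using ne coset_eq_iff by auto
qed

lemma cbar_coset: "cbar \<epsilon> (coset Fg \<gamma>) = coset Fg (- \<gamma> - \<epsilon>)"
proof (rule set_eqI)
  fix x
  have "x \<in> cbar \<epsilon> (coset Fg \<gamma>) \<longleftrightarrow> - x - \<epsilon> \<in> coset Fg \<gamma>"
  proof
    assume "x \<in> cbar \<epsilon> (coset Fg \<gamma>)"
    then obtain y where "y \<in> coset Fg \<gamma>" "x = - (y + \<epsilon>)" unfolding cbar_def by auto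
    moreover then have "- x - \<epsilon> = y" by simp
    ultimately show "- x - \<epsilon> \<in> coset Fg \<gamma>" by simp
  next
    assume a: "- x - \<epsilon> \<in> coset Fg \<gamma>"
    have "x = - ((- x - \<epsilon>) + \<epsilon>)" by simp
    then show "x \<in> cbar \<epsilon> (coset Fg \<gamma>)" unfolding cbar_def using a by blast
  qed
  also have e: "- x - \<epsilon> - \<gamma> = - (x - (- \<gamma> - \<epsilon>))" by (simp add: algebra_simps)
  have "- x - \<epsilon> \<in> coset Fg \<gamma> \<longleftrightarrow> - (x - (- \<gamma> - \<epsilon>)) \<in> GF" unfolding mem_coset e ..
  also have "\<dots> \<longleftrightarrow> x - (- \<gamma> - \<epsilon>) \<in> GF" using Gamma_uminus by force
  finally show "x \<in> cbar \<epsilon> (coset Fg \<gamma>) \<longleftrightarrow> x \<in> coset Fg (- \<gamma> - \<epsilon>)" unfolding mem_coset .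
qed

lemma memH: "\<gamma> \<in> HH \<longleftrightarrow> \<gamma> + \<gamma> \<in> GF" unfolding halfGammaF_def by simp

lemma E3: "\<delta> - \<gamma> \<in> GF \<Longrightarrow> \<gamma> \<in> HH \<longleftrightarrow> \<delta> \<in> HH"
proof -
  assume d: "\<delta> - \<gamma> \<in> GF"
  have e: "\<delta> + \<delta> = (\<gamma> + \<gamma>) + ((\<delta> - \<gamma>) + (\<delta> - \<gamma>))" by (simp add: algebra_simps)
  have m: "(\<delta> - \<gamma>) + (\<delta> - \<gamma>) \<in> GF" using Gamma_add d by auto
  have "(\<gamma> + \<gamma>) + ((\<delta> - \<gamma>) + (\<delta> - \<gamma>)) \<in> GF \<longleftrightarrow> \<gamma> + \<gamma> \<in> GF" by (rule Gamma_add_iff[OF m])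
  then show ?thesis unfolding memH e[symmetric] by simp
qed

lemma E4: "\<gamma> + \<delta> + \<epsilon> \<in> GF \<Longrightarrow> \<gamma> \<in> HH \<longleftrightarrow> \<delta> \<in> HH"
proof -
  assume d: "\<gamma> + \<delta> + \<epsilon> \<in> GF"
  let ?Z = "(\<gamma> + \<delta> + \<epsilon>) + (\<gamma> + \<delta> + \<epsilon>) - (\<epsilon> + \<epsilon>)"
  have e: "\<delta> + \<delta> = - (\<gamma> + \<gamma>) + ?Z" by (simp add: algebra_simps)
  have m: "?Z \<in> GF" using Gamma_add Gamma_diff d eps by blast
  have "- (\<gamma> + \<gamma>) + ?Z \<in> GF \<longleftrightarrow> - (\<gamma> + \<gamma>) \<in> GF" by (rule Gamma_add_iff[OF m])
  also have "\<dots> \<longleftrightarrow> \<gamma> + \<gamma> \<in> GF" using Gamma_uminus by force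
  finally show ?thesis unfolding memH e[symmetric] by simp
qed

lemma E1: "\<gamma> \<in> HH \<Longrightarrow> \<gamma> + \<delta> + \<epsilon> \<in> GF \<Longrightarrow> \<delta> - \<gamma> \<in> GF"
proof -
  assume h: "\<gamma> \<in> HH" and d: "\<gamma> + \<delta> + \<epsilon> \<in> GF"
  have e: "\<delta> - \<gamma> = ((\<gamma> + \<delta> + \<epsilon>) - (\<gamma> + \<gamma>)) - \<epsilon>" by (simp add: algebra_simps)
  have "(\<gamma> + \<delta> + \<epsilon>) - (\<gamma> + \<gamma>) \<in> GF" using Gamma_diff d h unfolding memH by blast
  then have "((\<gamma> + \<delta> + \<epsilon>) - (\<gamma> + \<gamma>)) - \<epsilon> \<in> GF" using Gamma_diff eps by blast
  then show ?thesis unfolding e .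
qed

lemma E2: "\<gamma> + \<delta> + \<epsilon> \<in> GF \<Longrightarrow> \<delta> - (- \<gamma> - \<epsilon>) \<in> GF"
proof -
  have "\<delta> - (- \<gamma> - \<epsilon>) = \<gamma> + \<delta> + \<epsilon>" by (simp add: algebra_simps)
  then show "\<gamma> + \<delta> + \<epsilon> \<in> GF \<Longrightarrow> \<delta> - (- \<gamma> - \<epsilon>) \<in> GF" by (simp only:)
qed

lemma E5: "\<gamma> \<notin> HH \<Longrightarrow> \<gamma> - (- \<gamma> - \<epsilon>) \<notin> GF"
proof
  assume h: "\<gamma> \<notin> HH" and a: "\<gamma> - (- \<gamma> - \<epsilon>) \<in> GF"
  have e: "\<gamma> + \<gamma> = (\<gamma> - (- \<gamma> - \<epsilon>)) - \<epsilon>" by (simp add: algebra_simps)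
  have "(\<gamma> - (- \<gamma> - \<epsilon>)) - \<epsilon> \<in> GF" using Gamma_diff a eps by blast
  then show False using h unfolding memH e[symmetric] by simp
qed

lemma stable_H: "stable HH"
  unfolding stable_def
proof (intro ballI)
  fix \<gamma> \<delta> assume "\<gamma> \<in> HH" "\<delta> \<in> GF"
  moreover have "(\<gamma> + \<delta>) - \<gamma> = \<delta>" by simp
  ultimately show "\<gamma> + \<delta> \<in> HH" using E3[of "\<gamma> + \<delta>" \<gamma>] by simp
qed
lemma stable_N: "stable (- HH)"
  using stable_uminus[OF stable_H] .
lemma stable_coset: "stable (coset Fg \<gamma>)"
  unfolding stable_def
proof (intro ballI)
  fix \<gamma>' \<delta> assume a: "\<gamma>' \<in> coset Fg \<gamma>" "\<delta> \<in> GF"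
  have e: "\<gamma>' + \<delta> - \<gamma> = (\<gamma>' - \<gamma>) + \<delta>" by (simp add: algebra_simps)
  have "(\<gamma>' - \<gamma>) + \<delta> \<in> GF" using a Gamma_add mem_coset by auto
  then show "\<gamma>' + \<delta> \<in> coset Fg \<gamma>" unfolding mem_coset e .
qed

lemma barcl_H: "barcl HH HH" unfolding barcl_def using E4 by blast
lemma barcl_N: "barcl (- HH) (- HH)" unfolding barcl_def using E4 by blast
lemma barcl_coset: "h \<in> HH \<Longrightarrow> barcl (coset Fg h) (coset Fg h)"
  unfolding barcl_def
proof (intro ballI allI impI)
  fix \<gamma> \<delta> assume h: "h \<in> HH" and g: "\<gamma> \<in> coset Fg h" and d: "\<gamma> + \<delta> + \<epsilon> \<in> GF"
  have gH: "\<gamma> \<in> HH" using E3 g h unfolding mem_coset by blast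
  have "\<delta> - \<gamma> \<in> GF" by (rule E1[OF gH d])
  moreover have "\<gamma> - h \<in> GF" using g mem_coset by auto
  ultimately have "(\<delta> - \<gamma>) + (\<gamma> - h) \<in> GF" by (rule Gamma_add)
  then show "\<delta> \<in> coset Fg h" unfolding mem_coset by simp
qed

lemma half_cosets_char: "\<Lambda> \<in> half_cosets Fg \<longleftrightarrow> (\<exists>h\<in>HH. \<Lambda> = coset Fg h)"
  unfolding half_cosets_def by auto

lemma Union_half: "\<Union> (half_cosets Fg) = HH"
proof
  show "\<Union> (half_cosets Fg) \<subseteq> HH"
  proof
    fix \<xi> assume "\<xi> \<in> \<Union> (half_cosets Fg)"
    then obtain h where "h \<in> HH" "\<xi> \<in> coset Fg h" using half_cosets_char by auto
    then show "\<xi> \<in> HH" using E3 mem_coset by blast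
  qed
  show "HH \<subseteq> \<Union> (half_cosets Fg)" using coset_self half_cosets_char by blast
qed

lemma half_family:
  shows "subsum (half_cosets Fg) (Vcos Vg) = Vcos Vg HH"
    and "orth_decomp b (subsum (half_cosets Fg) (Vcos Vg)) (half_cosets Fg) (Vcos Vg)"
proof -
  have disj: "i \<inter> j = {}" if ij: "i \<in> half_cosets Fg" "j \<in> half_cosets Fg" "i \<noteq> j" for i j
  proof -
    obtain h where h: "i = coset Fg h" using ij(1) unfolding half_cosets_char by blast
    obtain h' where h': "j = coset Fg h'" using ij(2) unfolding half_cosets_char by blast
    from h h' show ?thesis using coset_disj ij(3) by simp
  qed
  have S: "\<And>i. i \<in> half_cosets Fg \<Longrightarrow> Vcos Vg i = Vcos Vg i" by simp
  have U: "(\<Union>i\<in>half_cosets Fg. i) = HH" using Union_half by simp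
  show eq: "subsum (half_cosets Fg) (Vcos Vg) = Vcos Vg HH"
    using decomp_family(1)[where g="\<lambda>x. x", OF disj S] U by simp
  have orthc: "\<gamma> + \<delta> + \<epsilon> \<notin> GF" if ij: "i \<in> half_cosets Fg" "j \<in> half_cosets Fg" "i \<noteq> j" "\<gamma> \<in> i" "\<delta> \<in> j"
    for i j \<gamma> \<delta>
  proof
    assume d: "\<gamma> + \<delta> + \<epsilon> \<in> GF"
    obtain h where h: "h \<in> HH" "i = coset Fg h" using ij half_cosets_char by auto
    have "\<delta> \<in> i" using barcl_coset[OF h(1)] ij(4) d h(2) unfolding barcl_def by blast
    then show False using disj[OF ij(1-3)] ij(5) by auto
  qed
  show "orth_decomp b (subsum (half_cosets Fg) (Vcos Vg)) (half_cosets Fg) (Vcos Vg)"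
  proof -
    have D: "orth_decomp b (Vcos Vg (\<Union>i\<in>half_cosets Fg. i)) (half_cosets Fg) (Vcos Vg)"
      by (rule decomp_family(2)[where g="\<lambda>x. x" and I="half_cosets Fg" and S="Vcos Vg", OF disj S, where e=\<epsilon> and bb=b])
        (use orthc b_bil b_sh in auto)
    show ?thesis using D unfolding U eq .
  qed
qed

definition pr :: "'g \<Rightarrow> 'g set set" where
  "pr \<gamma> = {coset Fg \<gamma>, coset Fg (- \<gamma> - \<epsilon>)}"

lemma orb_char: "P \<in> orbits Fg \<epsilon> \<Longrightarrow> \<exists>\<gamma>. \<gamma> \<notin> HH \<and> P = pr \<gamma>"
proof -
  assume "P \<in> orbits Fg \<epsilon>"
  then obtain \<gamma> where P: "P = {coset Fg \<gamma>, cbar \<epsilon> (coset Fg \<gamma>)}" "coset Fg \<gamma> \<notin> half_cosets Fg"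
    unfolding orbits_def cosets_def by auto
  have "\<gamma> \<notin> HH" using P(2) half_cosets_char by auto
  then show ?thesis using P(1) cbar_coset pr_def by auto
qed

lemma pr_mem: "\<gamma> \<notin> HH \<Longrightarrow> pr \<gamma> \<in> orbits Fg \<epsilon>"
proof -
  assume g: "\<gamma> \<notin> HH"
  have "coset Fg \<gamma> \<notin> half_cosets Fg"
  proof
    assume "coset Fg \<gamma> \<in> half_cosets Fg"
    then obtain h where "h \<in> HH" "coset Fg \<gamma> = coset Fg h" using half_cosets_char by auto
    then show False using g E3 coset_eq_iff by blast
  qed
  then show ?thesis unfolding orbits_def cosets_def pr_def using cbar_coset by auto
qed

lemma pr_cong: "\<delta> - \<gamma> \<in> GF \<Longrightarrow> pr \<delta> = pr \<gamma>"
proof -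
  assume d: "\<delta> - \<gamma> \<in> GF"
  have e: "(- \<delta> - \<epsilon>) - (- \<gamma> - \<epsilon>) = - (\<delta> - \<gamma>)" by (simp add: algebra_simps)
  have "- (\<delta> - \<gamma>) \<in> GF" using Gamma_uminus d by blast
  then have "(- \<delta> - \<epsilon>) - (- \<gamma> - \<epsilon>) \<in> GF" unfolding e .
  then have c2: "coset Fg (- \<delta> - \<epsilon>) = coset Fg (- \<gamma> - \<epsilon>)" using coset_eq_iff by blast
  have c1: "coset Fg \<delta> = coset Fg \<gamma>" using coset_eq_iff d by blast
  show ?thesis unfolding pr_def c1 c2 ..
qed

lemma pr_bar: "\<gamma> + \<delta> + \<epsilon> \<in> GF \<Longrightarrow> pr \<delta> = pr \<gamma>"
proof -
  assume d: "\<gamma> + \<delta> + \<epsilon> \<in> GF"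
  have "coset Fg \<delta> = coset Fg (- \<gamma> - \<epsilon>)" using coset_eq_iff E2[OF d] by blast
  moreover have e: "(- \<delta> - \<epsilon>) - \<gamma> = - (\<gamma> + \<delta> + \<epsilon>)" by (simp add: algebra_simps)
  have "- (\<gamma> + \<delta> + \<epsilon>) \<in> GF" using Gamma_uminus d by blast
  then have "(- \<delta> - \<epsilon>) - \<gamma> \<in> GF" unfolding e .
  then have "coset Fg (- \<delta> - \<epsilon>) = coset Fg \<gamma>" using coset_eq_iff by blast
  ultimately show ?thesis unfolding pr_def by auto
qed

lemma Union_pr: "\<xi> \<in> \<Union> (pr \<gamma>) \<Longrightarrow> pr \<xi> = pr \<gamma>"
proof -
  assume "\<xi> \<in> \<Union> (pr \<gamma>)"
  then have "\<xi> \<in> coset Fg \<gamma> \<or> \<xi> \<in> coset Fg (- \<gamma> - \<epsilon>)" unfolding pr_def by auto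
  then have "\<xi> - \<gamma> \<in> GF \<or> \<xi> - (- \<gamma> - \<epsilon>) \<in> GF" unfolding mem_coset .
  then show ?thesis
  proof
    assume "\<xi> - \<gamma> \<in> GF" then show ?thesis by (rule pr_cong)
  next
    assume "\<xi> - (- \<gamma> - \<epsilon>) \<in> GF"
    then have "\<gamma> + \<xi> + \<epsilon> \<in> GF" by (simp add: algebra_simps)
    then show ?thesis by (rule pr_bar)
  qed
qed

lemma pr_N: "\<gamma> \<notin> HH \<Longrightarrow> \<Union> (pr \<gamma>) \<subseteq> - HH"
proof
  fix \<xi> assume g: "\<gamma> \<notin> HH" and x: "\<xi> \<in> \<Union> (pr \<gamma>)"
  then have "\<xi> \<in> coset Fg \<gamma> \<or> \<xi> \<in> coset Fg (- \<gamma> - \<epsilon>)" unfolding pr_def by auto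
  then have "\<xi> - \<gamma> \<in> GF \<or> \<xi> - (- \<gamma> - \<epsilon>) \<in> GF" unfolding mem_coset .
  then show "\<xi> \<in> - HH"
  proof
    assume "\<xi> - \<gamma> \<in> GF" then show ?thesis using E3 g by blast
  next
    assume "\<xi> - (- \<gamma> - \<epsilon>) \<in> GF"
    then have "\<gamma> + \<xi> + \<epsilon> \<in> GF" by (simp add: algebra_simps)
    then show ?thesis using E4 g by blast
  qed
qed

lemma Union_orbits: "(\<Union>P\<in>orbits Fg \<epsilon>. \<Union>P) = - HH"
proof
  show "(\<Union>P\<in>orbits Fg \<epsilon>. \<Union>P) \<subseteq> - HH" using orb_char pr_N by blast
  show "- HH \<subseteq> (\<Union>P\<in>orbits Fg \<epsilon>. \<Union>P)"
  proof
    fix \<gamma> assume "\<gamma> \<in> - HH"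
    then have "pr \<gamma> \<in> orbits Fg \<epsilon>" "\<gamma> \<in> \<Union>(pr \<gamma>)" using pr_mem coset_self unfolding pr_def by auto
    then show "\<gamma> \<in> (\<Union>P\<in>orbits Fg \<epsilon>. \<Union>P)" by blast
  qed
qed

lemma Vorb_eq: "P \<in> orbits Fg \<epsilon> \<Longrightarrow> Vorb Vg P = Vcos Vg (\<Union>P)"
proof -
  assume P: "P \<in> orbits Fg \<epsilon>"
  then obtain \<gamma> where "P = pr \<gamma>" using orb_char by auto
  then have Pc: "P \<subseteq> range (coset Fg)" unfolding pr_def by auto
  have disj: "i \<inter> j = {}" if ij: "i \<in> P" "j \<in> P" "i \<noteq> j" for i j
  proof -
    obtain h where h: "i = coset Fg h" using ij(1) Pc by blast
    obtain h' where h': "j = coset Fg h'" using ij(2) Pc by blast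
    from h h' show ?thesis using coset_disj ij(3) by simp
  qed
  have S: "\<And>i. i \<in> P \<Longrightarrow> Vcos Vg i = Vcos Vg i" by simp
  show ?thesis unfolding Vorb_def using decomp_family(1)[where g="\<lambda>x. x", OF disj S] by simp
qed

lemma orbit_family:
  shows "subsum (orbits Fg \<epsilon>) (Vorb Vg) = Vcos Vg (- HH)"
    and "orth_decomp b (subsum (orbits Fg \<epsilon>) (Vorb Vg)) (orbits Fg \<epsilon>) (Vorb Vg)"
proof -
  have disj: "\<And>i j. i \<in> orbits Fg \<epsilon> \<Longrightarrow> j \<in> orbits Fg \<epsilon> \<Longrightarrow> i \<noteq> j \<Longrightarrow> \<Union> i \<inter> \<Union> j = {}"
  proof (rule ccontr)
    fix i j assume ij: "i \<in> orbits Fg \<epsilon>" "j \<in> orbits Fg \<epsilon>" "i \<noteq> j" and "\<Union> i \<inter> \<Union> j \<noteq> {}"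
    then obtain \<xi> where x: "\<xi> \<in> \<Union> i" "\<xi> \<in> \<Union> j" by blast
    obtain \<gamma> where g: "i = pr \<gamma>" using orb_char ij(1) by blast
    obtain \<gamma>' where g': "j = pr \<gamma>'" using orb_char ij(2) by blast
    have "\<xi> \<in> \<Union> (pr \<gamma>)" using x(1) g by simp
    then have "pr \<xi> = pr \<gamma>" by (rule Union_pr)
    moreover have "\<xi> \<in> \<Union> (pr \<gamma>')" using x(2) g' by simp
    then have "pr \<xi> = pr \<gamma>'" by (rule Union_pr)
    ultimately have "i = j" using g g' by simp
    then show False using ij(3) by simp
  qed
  have S: "\<And>i. i \<in> orbits Fg \<epsilon> \<Longrightarrow> Vorb Vg i = Vcos Vg (\<Union> i)" by (rule Vorb_eq)
  show eq: "subsum (orbits Fg \<epsilon>) (Vorb Vg) = Vcos Vg (- HH)"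
    using decomp_family(1)[where g="\<lambda>P. \<Union>P" and I="orbits Fg \<epsilon>" and S="Vorb Vg", OF disj S] Union_orbits by simp
  have orthc: "\<gamma> + \<delta> + \<epsilon> \<notin> GF" if ij: "i \<in> orbits Fg \<epsilon>" "j \<in> orbits Fg \<epsilon>" "i \<noteq> j" "\<gamma> \<in> \<Union> i" "\<delta> \<in> \<Union> j"
    for i j \<gamma> \<delta>
  proof
    assume d: "\<gamma> + \<delta> + \<epsilon> \<in> GF"
    obtain \<zeta> where i: "i = pr \<zeta>" using orb_char ij(1) by blast
    have "\<gamma> \<in> \<Union> (pr \<zeta>)" using ij(4) i by simp
    then have "pr \<gamma> = pr \<zeta>" by (rule Union_pr)
    then have "pr \<gamma> = i" using i by simp
    have "\<delta> \<in> coset Fg (- \<gamma> - \<epsilon>)" unfolding mem_coset by (rule E2[OF d])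
    then have "\<delta> \<in> \<Union> (pr \<gamma>)" unfolding pr_def by blast
    then have "\<delta> \<in> \<Union> i" using \<open>pr \<gamma> = i\<close> by simp
    then show False using disj[OF ij(1-3)] ij(5) by auto
  qed
  show "orth_decomp b (subsum (orbits Fg \<epsilon>) (Vorb Vg)) (orbits Fg \<epsilon>) (Vorb Vg)"
  proof -
    have D: "orth_decomp b (Vcos Vg (\<Union>i\<in>orbits Fg \<epsilon>. \<Union>i)) (orbits Fg \<epsilon>) (Vorb Vg)"
      by (rule decomp_family(2)[where g="\<lambda>P. \<Union>P" and I="orbits Fg \<epsilon>" and S="Vorb Vg", OF disj S, where e=\<epsilon> and bb=b])
        (use orthc b_bil b_sh in auto)
    show ?thesis using D unfolding Union_orbits eq .
  qed
qed

lemma top_family: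
  "orth_decomp b UNIV {0::nat, 1}
     (\<lambda>i. if i = 0 then subsum (half_cosets Fg) (Vcos Vg) else subsum (orbits Fg \<epsilon>) (Vorb Vg))"
proof -
  let ?g = "\<lambda>i::nat. if i = 0 then HH else - HH"
  have disj: "\<And>i j. i \<in> {0::nat, 1} \<Longrightarrow> j \<in> {0, 1} \<Longrightarrow> i \<noteq> j \<Longrightarrow> ?g i \<inter> ?g j = {}" by auto
  have S: "\<And>i. i \<in> {0::nat, 1} \<Longrightarrow>
      (\<lambda>i. if i = 0 then subsum (half_cosets Fg) (Vcos Vg) else subsum (orbits Fg \<epsilon>) (Vorb Vg)) i = Vcos Vg (?g i)"
    using half_family(1) orbit_family(1) by auto
  have U: "(\<Union>i\<in>{0::nat, 1}. ?g i) = UNIV" by auto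
  have orthc: "\<gamma> + \<delta> + \<epsilon> \<notin> GF" if ij: "i \<in> {0::nat, 1}" "j \<in> {0::nat, 1}" "i \<noteq> j" "\<gamma> \<in> ?g i" "\<delta> \<in> ?g j"
    for i j \<gamma> \<delta>
    using ij E4 by auto
  have D: "orth_decomp b (Vcos Vg (\<Union>i\<in>{0::nat, 1}. ?g i)) {0::nat, 1}
     (\<lambda>i. if i = 0 then subsum (half_cosets Fg) (Vcos Vg) else subsum (orbits Fg \<epsilon>) (Vorb Vg))"
    by (rule decomp_family(2)[where g="?g", OF disj S, where e=\<epsilon> and bb=b]) (use orthc b_bil b_sh in auto)
  have VU: "Vcos Vg (\<Union>i\<in>{0::nat, 1}. ?g i) = UNIV" unfolding U by (rule Vcos_UNIV)
  show ?thesis using D unfolding VU .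
qed

end


context GSQ begin

definition rep :: "'g set set \<Rightarrow> 'g set" where "rep P = (SOME \<Lambda>. \<Lambda> \<in> P)"

definition G0 where "G0 = {\<gamma>. \<gamma> \<notin> HH \<and> rep (pr \<gamma>) = coset Fg \<gamma>}"
definition G1 where "G1 = {\<gamma>. \<gamma> \<notin> HH \<and> rep (pr \<gamma>) \<noteq> coset Fg \<gamma>}"

lemma rep_mem: "rep (pr \<gamma>) \<in> pr \<gamma>"
  unfolding rep_def pr_def by (rule someI[of _ "coset Fg \<gamma>"]) simp

lemma stable_G: "stable G0" "stable G1"
proof -
  have key: "\<gamma> + d \<notin> HH \<and> pr (\<gamma> + d) = pr \<gamma> \<and> coset Fg (\<gamma> + d) = coset Fg \<gamma>"
    if "\<gamma> \<notin> HH" "d \<in> GF" for \<gamma> d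
  proof -
    have e: "(\<gamma> + d) - \<gamma> = d" by simp
    have "(\<gamma> + d) - \<gamma> \<in> GF" unfolding e by (rule that(2))
    then show ?thesis using E3 pr_cong coset_eq_iff that(1) by blast
  qed
  show "stable G0" unfolding stable_def G0_def using key by auto
  show "stable G1" unfolding stable_def G1_def using key by auto
qed

lemma bar_facts: assumes "\<gamma> \<notin> HH" "\<gamma> + \<delta> + \<epsilon> \<in> GF"
  shows "\<delta> \<notin> HH" "pr \<delta> = pr \<gamma>" "coset Fg \<delta> = coset Fg (- \<gamma> - \<epsilon>)" "coset Fg \<gamma> \<noteq> coset Fg (- \<gamma> - \<epsilon>)"
proof -
  show "\<delta> \<notin> HH" using E4 assms by blast
  show "pr \<delta> = pr \<gamma>" by (rule pr_bar[OF assms(2)])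
  show "coset Fg \<delta> = coset Fg (- \<gamma> - \<epsilon>)" using coset_eq_iff E2[OF assms(2)] by blast
  show "coset Fg \<gamma> \<noteq> coset Fg (- \<gamma> - \<epsilon>)" using coset_eq_iff E5[OF assms(1)] by blast
qed

lemma barcl_G01: "barcl G0 G1"
  unfolding barcl_def
proof (intro ballI allI impI)
  fix \<gamma> \<delta> assume g: "\<gamma> \<in> G0" and d: "\<gamma> + \<delta> + \<epsilon> \<in> GF"
  have g': "\<gamma> \<notin> HH" "rep (pr \<gamma>) = coset Fg \<gamma>" using g unfolding G0_def by auto
  note bf = bar_facts[OF g'(1) d]
  have "rep (pr \<delta>) \<noteq> coset Fg \<delta>" using bf g'(2) by simp
  then show "\<delta> \<in> G1" unfolding G1_def using bf by simp
qed

lemma barcl_G10: "barcl G1 G0"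
  unfolding barcl_def
proof (intro ballI allI impI)
  fix \<gamma> \<delta> assume g: "\<gamma> \<in> G1" and d: "\<gamma> + \<delta> + \<epsilon> \<in> GF"
  have g': "\<gamma> \<notin> HH" "rep (pr \<gamma>) \<noteq> coset Fg \<gamma>" using g unfolding G1_def by auto
  note bf = bar_facts[OF g'(1) d]
  have "rep (pr \<gamma>) \<in> pr \<gamma>" by (rule rep_mem)
  then have "rep (pr \<gamma>) = coset Fg (- \<gamma> - \<epsilon>)" using g'(2) unfolding pr_def by auto
  then have "rep (pr \<delta>) = coset Fg \<delta>" using bf by simp
  then show "\<delta> \<in> G0" unfolding G0_def using bf by simp
qed

lemma G0_self: "\<gamma> \<in> G0 \<Longrightarrow> \<delta> \<in> G0 \<Longrightarrow> \<gamma> + \<delta> + \<epsilon> \<notin> GF"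
proof
  assume a: "\<gamma> \<in> G0" "\<delta> \<in> G0" "\<gamma> + \<delta> + \<epsilon> \<in> GF"
  then have "\<delta> \<in> G1" using barcl_G01 unfolding barcl_def by blast
  then show False using a(2) unfolding G0_def G1_def by auto
qed

lemma G0_self0: "\<gamma> \<in> G0 \<Longrightarrow> \<delta> \<in> G0 \<Longrightarrow> \<gamma> + \<delta> \<notin> GF"
proof
  assume a: "\<gamma> \<in> G0" "\<delta> \<in> G0" "\<gamma> + \<delta> \<in> GF"
  then have "\<gamma> + \<delta> + \<epsilon> \<in> GF" using Gamma_add eps by blast
  then show False using G0_self a by blast
qed

lemma G01_union: "G0 \<union> G1 = - HH" unfolding G0_def G1_def by auto
lemma G01_disj: "G0 \<inter> G1 = {}" unfolding G0_def G1_def by auto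

lemma metabolic_N: "metabolic sc Vg (Vcos Vg (- HH)) q b"
  unfolding metabolic_def
proof (intro exI conjI ballI)
  show "graded_subspace Vg sc (Vcos Vg G0)" by (rule Vcos_graded_subspace[OF stable_G(1)])
  show "Vcos Vg G0 \<subseteq> Vcos Vg (- HH)" by (rule Vcos_mono) (use G01_union in auto)
  fix x assume x: "x \<in> Vcos Vg G0"
  show "q x = 0" by (rule q_vanish[OF _ x]) (use G0_self0 in auto)
  fix y assume y: "y \<in> Vcos Vg G0"
  show "b x y = 0" by (rule orth[OF b_bil b_sh x y]) (use G0_self in auto)
next
  obtain B where B: "finite B" "hbasis Vg sc UNIV B" using finB by auto
  let ?B0 = "{v\<in>B. v \<in> Vcos Vg G0}" and ?B1 = "{v\<in>B. v \<in> Vcos Vg G1}" and ?BN = "{v\<in>B. v \<in> Vcos Vg (- HH)}"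
  have b0: "hbasis Vg sc (Vcos Vg G0) ?B0" by (rule Vcos_basis[OF stable_G(1) B])
  have b1: "hbasis Vg sc (Vcos Vg G1) ?B1" by (rule Vcos_basis[OF stable_G(2) B])
  have bN: "hbasis Vg sc (Vcos Vg (- HH)) ?BN" by (rule Vcos_basis[OF stable_N B])
  have f: "finite ?B0" "finite ?B1" "finite ?BN" using B(1) by auto
  have Bi: "lin_indep sc B" "\<forall>v\<in>B. homogeneous Vg v" using B(2) unfolding hbasis_def by auto
  have split: "v \<in> Vcos Vg (- HH) \<longleftrightarrow> v \<in> Vcos Vg G0 \<or> v \<in> Vcos Vg G1"
    and disj: "\<not> (v \<in> Vcos Vg G0 \<and> v \<in> Vcos Vg G1)" if v: "v \<in> B" for v
  proof -
    obtain \<delta> where d: "v \<in> Vg \<delta>" using Bi(2) v unfolding homogeneous_def by auto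
    have nz: "v \<noteq> 0" using indep_nz[OF Bi(1)] v by auto
    show "v \<in> Vcos Vg (- HH) \<longleftrightarrow> v \<in> Vcos Vg G0 \<or> v \<in> Vcos Vg G1"
      using homog_Vcos_iff[OF d nz] G01_union by auto
    show "\<not> (v \<in> Vcos Vg G0 \<and> v \<in> Vcos Vg G1)"
      using homog_Vcos_iff[OF d nz] G01_disj by auto
  qed
  have U: "?BN = ?B0 \<union> ?B1" using split by auto
  have I: "?B0 \<inter> ?B1 = {}" using disj by auto
  have cN: "card ?BN = card ?B0 + card ?B1" unfolding U by (rule card_Un_disjoint[OF f(1,2) I])
  have "card ?B0 \<le> card ?B1" by (rule pairing_le[OF stable_G barcl_G01 f(1) b0 f(2) b1])
  moreover have "card ?B1 \<le> card ?B0" by (rule pairing_le[OF stable_G(2,1) barcl_G10 f(2) b1 f(1) b0])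
  ultimately have "card ?BN = 2 * card ?B0" using cN by simp
  then show "2 * gdim Vg sc (Vcos Vg G0) = gdim Vg sc (Vcos Vg (- HH))"
    using gdim_eq[OF f(1) b0] gdim_eq[OF f(3) bN] by simp
qed

end


theorem proposition3p4:
  fixes Fg :: "'g::ab_group_add \<Rightarrow> 'f::comm_ring_1 set"
    and sc :: "'f \<Rightarrow> 'v::ab_group_add \<Rightarrow> 'v"
    and Vg :: "'g \<Rightarrow> 'v set"
    and \<epsilon> :: 'g
    and q :: "'v \<Rightarrow> 'f"
    and b :: "'v \<Rightarrow> 'v \<Rightarrow> 'f"
    and T :: "'f qtype"
  assumes "divisible_torsion_free TYPE('g)"
    and "graded_field Fg"
    and "\<epsilon> \<in> GammaF Fg"
    and "graded_vspace Fg sc Vg"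
    and "eps_qspace Fg sc Vg \<epsilon> UNIV q b"
    and "qtype_ok Fg \<epsilon> T"
    and "has_type T \<epsilon> UNIV q b"
  shows "orth_decomp b UNIV {0::nat, 1}
           (\<lambda>i. if i = 0 then subsum (half_cosets Fg) (Vcos Vg) else subsum (orbits Fg \<epsilon>) (Vorb Vg))
       \<and> orth_decomp b (subsum (half_cosets Fg) (Vcos Vg)) (half_cosets Fg) (Vcos Vg)
       \<and> orth_decomp b (subsum (orbits Fg \<epsilon>) (Vorb Vg)) (orbits Fg \<epsilon>) (Vorb Vg)
       \<and> (\<forall>\<Lambda>\<in>half_cosets Fg. eps_qspace Fg sc Vg \<epsilon> (Vcos Vg \<Lambda>) q b \<and> has_type T \<epsilon> (Vcos Vg \<Lambda>) q b)
       \<and> eps_qspace Fg sc Vg \<epsilon> (subsum (orbits Fg \<epsilon>) (Vorb Vg)) q b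
       \<and> has_type T \<epsilon> (subsum (orbits Fg \<epsilon>) (Vorb Vg)) q b
       \<and> metabolic sc Vg (subsum (orbits Fg \<epsilon>) (Vorb Vg)) q b"
proof -
  interpret GSQ Fg sc Vg \<epsilon> q b
    by unfold_locales (use assms in auto)
  have half: "\<forall>\<Lambda>\<in>half_cosets Fg. eps_qspace Fg sc Vg \<epsilon> (Vcos Vg \<Lambda>) q b \<and> has_type T \<epsilon> (Vcos Vg \<Lambda>) q b"
  proof
    fix \<Lambda> assume "\<Lambda> \<in> half_cosets Fg"
    then obtain h where h: "h \<in> halfGammaF Fg" "\<Lambda> = coset Fg h" using half_cosets_char by blast
    show "eps_qspace Fg sc Vg \<epsilon> (Vcos Vg \<Lambda>) q b \<and> has_type T \<epsilon> (Vcos Vg \<Lambda>) q b"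
      unfolding h(2)
      using eps_qspace_sub[OF stable_coset barcl_coset[OF h(1)]] has_type_sub[OF assms(7) Vcos_zero] by blast
  qed
  show ?thesis
    unfolding orbit_family(1)
    using top_family[unfolded orbit_family(1)] half_family(2) orbit_family(2)[unfolded orbit_family(1)] half
      eps_qspace_sub[OF stable_N barcl_N] has_type_sub[OF assms(7) Vcos_zero] metabolic_N
    by blast
qed


end
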